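(* Let $(W,S)$ be a Coxeter system with $S$ finite, $\phi:\operatorname{Ad}(Q_W)\to W$ the homomorphism $e_x\mapsto x$, and $C_W=\ker\phi$. Then the rank of the abelian group $C_W$ (i.e. $\dim_{\mathbb{Q}}(C_W\otimes\mathbb{Q})$) equals $c(W)$, the number of $W$-conjugacy classes of elements of $Q_W$.
   Context: A Coxeter system $(W,S)$: $S$ finite, $m:S\times S\to\mathbb{N}\cup\{\infty\}$ with $m(s,s)=1$, $2\le m(s,t)=m(t,s)\le\infty$ for $s\ne t$, $W=\langle s\in S\mid (st)^{m(s,t)}=1\ (m(s,t)<\infty)\rangle$. The Coxeter quandle is $Q_W=\bigcup_{w\in W}w^{-1}Sw$ with $x\ast y=yxy$, and $\operatorname{Ad}(Q_W)=\langle e_x\ (x\in Q_W)\mid e_y^{-1}e_xe_y=e_{x\ast y}\rangle$. $C_W$ is a central (hence abelian) subgroup of $\operatorname{Ad}(Q_W)$. *)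

theory Defs
  imports "HOL-Algebra.Algebra" "HOL-Library.Extended_Nat"
begin

text \<open>Words over a generator set A: letters (a, True) = a, (a, False) = a inverse.\<close>

definition pres_words :: "'a set \<Rightarrow> ('a \<times> bool) list set" where
  "pres_words A = {w. \<forall>p \<in> set w. fst p \<in> A}"

inductive_set pres_rel :: "'a set \<Rightarrow> ('a \<times> bool) list set \<Rightarrow>
    (('a \<times> bool) list \<times> ('a \<times> bool) list) set"
  for A :: "'a set" and R :: "('a \<times> bool) list set" where
  pr_refl: "w \<in> pres_words A \<Longrightarrow> (w, w) \<in> pres_rel A R"
| pr_sym: "(u, v) \<in> pres_rel A R \<Longrightarrow> (v, u) \<in> pres_rel A R"
| pr_trans: "(u, v) \<in> pres_rel A R \<Longrightarrow> (v, w) \<in> pres_rel A R \<Longrightarrow> (u, w) \<in> pres_rel A R"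
| pr_cancel: "x \<in> pres_words A \<Longrightarrow> y \<in> pres_words A \<Longrightarrow> a \<in> A \<Longrightarrow>
      (x @ [(a, b), (a, \<not> b)] @ y, x @ y) \<in> pres_rel A R"
| pr_relator: "x \<in> pres_words A \<Longrightarrow> y \<in> pres_words A \<Longrightarrow> r \<in> R \<Longrightarrow> r \<in> pres_words A \<Longrightarrow>
      (x @ r @ y, x @ y) \<in> pres_rel A R"

definition presented_group :: "'a set \<Rightarrow> ('a \<times> bool) list set \<Rightarrow> ('a \<times> bool) list set monoid" where
  "presented_group A R =
     \<lparr> carrier = pres_words A // pres_rel A R,
       monoid.mult = (\<lambda>U V. pres_rel A R `` {(SOME u. u \<in> U) @ (SOME v. v \<in> V)}),
       monoid.one = pres_rel A R `` {[]} \<rparr>"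

definition pres_gen :: "'a set \<Rightarrow> ('a \<times> bool) list set \<Rightarrow> 'a \<Rightarrow> ('a \<times> bool) list set" where
  "pres_gen A R a = pres_rel A R `` {[(a, True)]}"

definition word_eval :: "('b, 'm) monoid_scheme \<Rightarrow> ('a \<Rightarrow> 'b) \<Rightarrow> ('a \<times> bool) list \<Rightarrow> 'b" where
  "word_eval G f w =
     foldr (\<lambda>p acc. (if snd p then f (fst p) else inv\<^bsub>G\<^esub> (f (fst p))) \<otimes>\<^bsub>G\<^esub> acc) w \<one>\<^bsub>G\<^esub>"

text \<open>m(s,t) in \<open>\<nat> \<union> {\<infinity>}\<close> modelled by enat.\<close>

definition coxeter_system :: "'g set \<Rightarrow> ('g \<Rightarrow> 'g \<Rightarrow> enat) \<Rightarrow> bool" where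
  "coxeter_system S m \<longleftrightarrow> finite S \<and> (\<forall>s \<in> S. m s s = 1) \<and>
     (\<forall>s \<in> S. \<forall>t \<in> S. s \<noteq> t \<longrightarrow> 2 \<le> m s t \<and> m s t = m t s)"

definition cox_rels :: "'g set \<Rightarrow> ('g \<Rightarrow> 'g \<Rightarrow> enat) \<Rightarrow> ('g \<times> bool) list set" where
  "cox_rels S m = {concat (replicate k [(s, True), (t, True)]) | s t k.
                     s \<in> S \<and> t \<in> S \<and> m s t = enat k}"

definition coxeter_group :: "'g set \<Rightarrow> ('g \<Rightarrow> 'g \<Rightarrow> enat) \<Rightarrow> ('g \<times> bool) list set monoid" where
  "coxeter_group S m = presented_group S (cox_rels S m)"

definition coxeter_quandle :: "'g set \<Rightarrow> ('g \<Rightarrow> 'g \<Rightarrow> enat) \<Rightarrow> ('g \<times> bool) list set set" where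
  "coxeter_quandle S m =
     {inv\<^bsub>coxeter_group S m\<^esub> w \<otimes>\<^bsub>coxeter_group S m\<^esub> pres_gen S (cox_rels S m) s
        \<otimes>\<^bsub>coxeter_group S m\<^esub> w | w s. w \<in> carrier (coxeter_group S m) \<and> s \<in> S}"

definition quandle_op :: "('b, 'm) monoid_scheme \<Rightarrow> 'b \<Rightarrow> 'b \<Rightarrow> 'b" where
  "quandle_op G x y = y \<otimes>\<^bsub>G\<^esub> x \<otimes>\<^bsub>G\<^esub> y"

definition ad_rels :: "'g set \<Rightarrow> ('g \<Rightarrow> 'g \<Rightarrow> enat) \<Rightarrow>
    (('g \<times> bool) list set \<times> bool) list set" where
  "ad_rels S m = {[(y, False), (x, True), (y, True), (quandle_op (coxeter_group S m) x y, False)] | x y.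
                    x \<in> coxeter_quandle S m \<and> y \<in> coxeter_quandle S m}"

definition adjoint_group :: "'g set \<Rightarrow> ('g \<Rightarrow> 'g \<Rightarrow> enat) \<Rightarrow>
    (('g \<times> bool) list set \<times> bool) list set monoid" where
  "adjoint_group S m = presented_group (coxeter_quandle S m) (ad_rels S m)"

definition ad_phi :: "'g set \<Rightarrow> ('g \<Rightarrow> 'g \<Rightarrow> enat) \<Rightarrow>
    (('g \<times> bool) list set \<times> bool) list set \<Rightarrow> ('g \<times> bool) list set" where
  "ad_phi S m U = word_eval (coxeter_group S m) id (SOME u. u \<in> U)"

definition C_W :: "'g set \<Rightarrow> ('g \<Rightarrow> 'g \<Rightarrow> enat) \<Rightarrow> (('g \<times> bool) list set \<times> bool) list set set" where
  "C_W S m = kernel (adjoint_group S m) (coxeter_group S m) (ad_phi S m)"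

definition conj_class :: "('b, 'm) monoid_scheme \<Rightarrow> 'b \<Rightarrow> 'b set" where
  "conj_class G x = {inv\<^bsub>G\<^esub> g \<otimes>\<^bsub>G\<^esub> x \<otimes>\<^bsub>G\<^esub> g | g. g \<in> carrier G}"

definition Z_independent :: "('b, 'm) monoid_scheme \<Rightarrow> 'b set \<Rightarrow> bool" where
  "Z_independent G B \<longleftrightarrow> B \<subseteq> carrier G \<and> finite B \<and>
     (\<forall>n :: 'b \<Rightarrow> int. finprod G (\<lambda>x. pow G x (n x)) B = \<one>\<^bsub>G\<^esub> \<longrightarrow> (\<forall>x \<in> B. n x = 0))"

text \<open>The (torsion-free) rank of an abelian group is r: the maximal size of a
  \<open>\<int>\<close>-independent subset is r (equivalently \<open>dim_\<rat> (G \<otimes> \<rat>) = r\<close>).\<close>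

definition has_rank :: "('b, 'm) monoid_scheme \<Rightarrow> nat \<Rightarrow> bool" where
  "has_rank G r \<longleftrightarrow> (\<exists>B. Z_independent G B \<and> card B = r) \<and>
     (\<forall>B. Z_independent G B \<longrightarrow> card B \<le> r)"

end

theory Submission
  imports Defs
begin

lemma pres_rel_words:
  assumes "(u, v) \<in> pres_rel A R" shows "u \<in> pres_words A \<and> v \<in> pres_words A"
  using assms by induct (auto simp: pres_words_def)

lemma pres_words_append[simp]: "xs @ ys \<in> pres_words A \<longleftrightarrow> xs \<in> pres_words A \<and> ys \<in> pres_words A"
  by (auto simp: pres_words_def)

lemma pres_words_Cons[simp]: "p # ys \<in> pres_words A \<longleftrightarrow> fst p \<in> A \<and> ys \<in> pres_words A"
  by (auto simp: pres_words_def)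

lemma pres_words_Nil[simp]: "[] \<in> pres_words A"
  by (auto simp: pres_words_def)

lemma pres_equiv: "equiv (pres_words A) (pres_rel A R)"
proof -
  have "pres_rel A R \<subseteq> pres_words A \<times> pres_words A" by (clarify, drule pres_rel_words, simp)
  then show ?thesis
    unfolding equiv_def refl_on_def sym_def trans_def
    by (blast intro: pres_rel.intros)
qed

lemma pres_cong_left:
  assumes "(u, v) \<in> pres_rel A R" "w \<in> pres_words A"
  shows "(w @ u, w @ v) \<in> pres_rel A R"
  using assms(1)
proof induct
  case (pr_cancel x y a b)
  then show ?case using pres_rel.pr_cancel[where x="w@x" and y=y and a=a and b=b] assms(2) by simp
next
  case (pr_relator x y r)
  then show ?case using pres_rel.pr_relator[where x="w@x" and y=y and r=r] assms(2) by simp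
qed (auto intro: pres_rel.intros simp: assms)

lemma pres_cong_right:
  assumes "(u, v) \<in> pres_rel A R" "w \<in> pres_words A"
  shows "(u @ w, v @ w) \<in> pres_rel A R"
  using assms(1)
proof induct
  case (pr_cancel x y a b)
  then show ?case using pres_rel.pr_cancel[where x=x and y="y@w" and a=a and b=b] assms(2) by simp
next
  case (pr_relator x y r)
  then show ?case using pres_rel.pr_relator[where x=x and y="y@w" and r=r] assms(2) by simp
qed (auto intro: pres_rel.intros simp: assms)

lemma pres_cong:
  assumes "(u, v) \<in> pres_rel A R" "(u', v') \<in> pres_rel A R"
  shows "(u @ u', v @ v') \<in> pres_rel A R"
proof -
  have "(u @ u', v @ u') \<in> pres_rel A R"
    using pres_cong_right assms pres_rel_words by blast
  moreover have "(v @ u', v @ v') \<in> pres_rel A R"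
    using pres_cong_left assms pres_rel_words by blast
  ultimately show ?thesis by (rule pres_rel.pr_trans)
qed

lemma pres_class_eq:
  assumes "(u, v) \<in> pres_rel A R" shows "pres_rel A R `` {u} = pres_rel A R `` {v}"
  using equiv_class_eq[OF pres_equiv assms] .

lemma pres_class_eq_iff:
  assumes "u \<in> pres_words A" "v \<in> pres_words A"
  shows "pres_rel A R `` {u} = pres_rel A R `` {v} \<longleftrightarrow> (u, v) \<in> pres_rel A R"
  using eq_equiv_class_iff[OF pres_equiv assms] .

lemma pres_self: "u \<in> pres_words A \<Longrightarrow> u \<in> pres_rel A R `` {u}"
  using pres_rel.pr_refl by blast

lemma pres_some_class:
  assumes "U \<in> pres_words A // pres_rel A R"
  shows "(SOME u. u \<in> U) \<in> U \<and> (SOME u. u \<in> U) \<in> pres_words A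
        \<and> U = pres_rel A R `` {SOME u. u \<in> U}"
proof -
  obtain u where u: "u \<in> pres_words A" "U = pres_rel A R `` {u}"
    using assms by (auto elim: quotientE)
  then have "u \<in> U" using pres_self by blast
  then have s: "(SOME u. u \<in> U) \<in> U" by (rule someI)
  then have "(u, SOME u. u \<in> U) \<in> pres_rel A R" using u by blast
  then show ?thesis using s u pres_rel_words pres_class_eq by metis
qed

lemma pres_carrier: "carrier (presented_group A R) = pres_words A // pres_rel A R"
  by (simp add: presented_group_def)

lemma pres_class_in: "u \<in> pres_words A \<Longrightarrow> pres_rel A R `` {u} \<in> carrier (presented_group A R)"
  by (simp add: pres_carrier quotientI)

lemma pres_one: "\<one>\<^bsub>presented_group A R\<^esub> = pres_rel A R `` {[]}"
  by (simp add: presented_group_def)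

lemma pres_mult:
  assumes "u \<in> pres_words A" "v \<in> pres_words A"
  shows "pres_rel A R `` {u} \<otimes>\<^bsub>presented_group A R\<^esub> pres_rel A R `` {v} = pres_rel A R `` {u @ v}"
proof -
  let ?U = "pres_rel A R `` {u}" and ?V = "pres_rel A R `` {v}"
  have "(u, SOME x. x \<in> ?U) \<in> pres_rel A R"
    using someI[of "\<lambda>x. x \<in> ?U" u] pres_self[OF assms(1)] by blast
  moreover have "(v, SOME x. x \<in> ?V) \<in> pres_rel A R"
    using someI[of "\<lambda>x. x \<in> ?V" v] pres_self[OF assms(2)] by blast
  ultimately have "(u @ v, (SOME x. x \<in> ?U) @ (SOME x. x \<in> ?V)) \<in> pres_rel A R"
    by (rule pres_cong)
  then show ?thesis by (simp add: presented_group_def pres_class_eq)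
qed

definition inv_word :: "('a \<times> bool) list \<Rightarrow> ('a \<times> bool) list" where
  "inv_word u = rev (map (\<lambda>p. (fst p, \<not> snd p)) u)"

lemma inv_word_words[simp]: "inv_word u \<in> pres_words A \<longleftrightarrow> u \<in> pres_words A"
  by (auto simp: inv_word_def pres_words_def)

lemma inv_word_inv[simp]: "inv_word (inv_word u) = u"
  by (induct u) (auto simp: inv_word_def)

lemma inv_word_Cons: "inv_word (p # u) = inv_word u @ [(fst p, \<not> snd p)]"
  by (simp add: inv_word_def)

lemma inv_word_right: "u \<in> pres_words A \<Longrightarrow> (u @ inv_word u, []) \<in> pres_rel A R"
proof (induct u)
  case Nil then show ?case by (simp add: inv_word_def pres_rel.pr_refl)
next
  case (Cons p u)
  obtain a b where p: "p = (a, b)" by force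
  have a: "a \<in> A" "u \<in> pres_words A" using Cons p by auto
  have "(u @ inv_word u, []) \<in> pres_rel A R" using Cons a by simp
  then have "([(a,b)] @ (u @ inv_word u) @ [(a, \<not> b)], [(a,b)] @ [] @ [(a, \<not> b)]) \<in> pres_rel A R"
    using pres_cong_left pres_cong_right a by (metis pres_words_Cons pres_words_Nil fst_conv)
  moreover have "([] @ [(a,b), (a, \<not> b)] @ [], [] @ []) \<in> pres_rel A R"
    using pres_rel.pr_cancel[where x="[]" and y="[]" and a=a and b=b] a by simp
  ultimately show ?case using p by (auto simp: inv_word_Cons intro: pres_rel.pr_trans)
qed

lemma inv_word_left: "u \<in> pres_words A \<Longrightarrow> (inv_word u @ u, []) \<in> pres_rel A R"
  using inv_word_right[of "inv_word u" A R] by simp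

lemma presented_group_is_group: "group (presented_group A R)"
proof (rule groupI)
  fix x y assume "x \<in> carrier (presented_group A R)" "y \<in> carrier (presented_group A R)"
  then show "x \<otimes>\<^bsub>presented_group A R\<^esub> y \<in> carrier (presented_group A R)"
    by (auto simp: pres_carrier quotient_def pres_mult intro: pres_class_in[simplified pres_carrier])
next
  show "\<one>\<^bsub>presented_group A R\<^esub> \<in> carrier (presented_group A R)"
    by (simp add: pres_one pres_class_in)
next
  fix x y z assume "x \<in> carrier (presented_group A R)" "y \<in> carrier (presented_group A R)"
     "z \<in> carrier (presented_group A R)"
  then show "x \<otimes>\<^bsub>presented_group A R\<^esub> y \<otimes>\<^bsub>presented_group A R\<^esub> z =
      x \<otimes>\<^bsub>presented_group A R\<^esub> (y \<otimes>\<^bsub>presented_group A R\<^esub> z)"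
    by (auto simp: pres_carrier quotient_def pres_mult)
next
  fix x assume "x \<in> carrier (presented_group A R)"
  then show "\<one>\<^bsub>presented_group A R\<^esub> \<otimes>\<^bsub>presented_group A R\<^esub> x = x"
    by (auto simp: pres_carrier quotient_def pres_mult pres_one)
next
  fix x assume "x \<in> carrier (presented_group A R)"
  then obtain u where u: "u \<in> pres_words A" "x = pres_rel A R `` {u}"
    by (auto simp: pres_carrier quotient_def)
  show "\<exists>y\<in>carrier (presented_group A R). y \<otimes>\<^bsub>presented_group A R\<^esub> x = \<one>\<^bsub>presented_group A R\<^esub>"
    by (rule bexI[of _ "pres_rel A R `` {inv_word u}"])
       (auto simp: u pres_mult pres_one pres_class_in inv_word_left pres_class_eq)
qed

lemma word_eval_Nil[simp]: "word_eval G f [] = \<one>\<^bsub>G\<^esub>"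
  by (simp add: word_eval_def)

lemma word_eval_Cons: "word_eval G f (p # u) =
   (if snd p then f (fst p) else inv\<^bsub>G\<^esub> (f (fst p))) \<otimes>\<^bsub>G\<^esub> word_eval G f u"
  by (simp add: word_eval_def)

lemma (in group) word_eval_closed:
  "f ` A \<subseteq> carrier G \<Longrightarrow> u \<in> pres_words A \<Longrightarrow> word_eval G f u \<in> carrier G"
  by (induct u) (auto simp: word_eval_Cons)

lemma (in group) word_eval_append:
  "f ` A \<subseteq> carrier G \<Longrightarrow> u \<in> pres_words A \<Longrightarrow> v \<in> pres_words A \<Longrightarrow>
   word_eval G f (u @ v) = word_eval G f u \<otimes> word_eval G f v"
  by (induct u) (auto simp: word_eval_Cons m_assoc word_eval_closed image_subset_iff)

lemma (in group) word_eval_resp: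
  assumes f: "f ` A \<subseteq> carrier G"
    and rel: "\<And>r. r \<in> R \<Longrightarrow> r \<in> pres_words A \<Longrightarrow> word_eval G f r = \<one>"
    and "(u, v) \<in> pres_rel A R"
  shows "word_eval G f u = word_eval G f v"
  using assms(3)
proof induct
  case (pr_cancel x y a b)
  have fa: "f a \<in> carrier G" using f pr_cancel by auto
  have e: "word_eval G f [(a,b),(a,\<not>b)] = \<one>"
    using fa by (auto simp: word_eval_Cons)
  have "word_eval G f (x @ [(a,b),(a,\<not>b)] @ y) = word_eval G f x \<otimes> (word_eval G f [(a,b),(a,\<not>b)] \<otimes> word_eval G f y)"
    using pr_cancel f fa by (simp add: word_eval_append[OF f] del: append.simps)
  then show ?case using pr_cancel f e
    by (simp add: word_eval_append word_eval_closed)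
next
  case (pr_relator x y r)
  then show ?case using f rel by (simp add: word_eval_append word_eval_closed)
qed auto

definition pres_hom :: "('b, 'm) monoid_scheme \<Rightarrow> ('a \<Rightarrow> 'b) \<Rightarrow> ('a \<times> bool) list set \<Rightarrow> 'b" where
  "pres_hom G f U = word_eval G f (SOME u. u \<in> U)"

lemma (in group) pres_hom_class:
  assumes f: "f ` A \<subseteq> carrier G"
    and rel: "\<And>r. r \<in> R \<Longrightarrow> r \<in> pres_words A \<Longrightarrow> word_eval G f r = \<one>"
    and u: "u \<in> pres_words A"
  shows "pres_hom G f (pres_rel A R `` {u}) = word_eval G f u"
proof -
  have "(SOME x. x \<in> pres_rel A R `` {u}) \<in> pres_rel A R `` {u}"
    using pres_self[OF u] by (rule someI)
  then have "(u, SOME x. x \<in> pres_rel A R `` {u}) \<in> pres_rel A R" by simp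
  then have "word_eval G f u = word_eval G f (SOME x. x \<in> pres_rel A R `` {u})"
    using word_eval_resp[where R=R and A=A and f=f] f rel by blast
  then show ?thesis unfolding pres_hom_def by simp
qed

lemma (in group) pres_hom_hom:
  assumes f: "f ` A \<subseteq> carrier G"
    and rel: "\<And>r. r \<in> R \<Longrightarrow> r \<in> pres_words A \<Longrightarrow> word_eval G f r = \<one>"
  shows "pres_hom G f \<in> hom (presented_group A R) G"
proof (rule homI)
  fix x assume "x \<in> carrier (presented_group A R)"
  then obtain u where u: "u \<in> pres_words A" "x = pres_rel A R `` {u}"
    by (auto simp: pres_carrier quotient_def)
  then show "pres_hom G f x \<in> carrier G"
    using pres_hom_class[OF f rel] word_eval_closed[OF f] by simp
next
  fix x y assume "x \<in> carrier (presented_group A R)" "y \<in> carrier (presented_group A R)"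
  then obtain u v where u: "u \<in> pres_words A" "x = pres_rel A R `` {u}"
    and v: "v \<in> pres_words A" "y = pres_rel A R `` {v}"
    by (auto simp: pres_carrier quotient_def)
  have "pres_hom G f (x \<otimes>\<^bsub>presented_group A R\<^esub> y) = pres_hom G f (pres_rel A R `` {u @ v})"
    using u v by (simp add: pres_mult)
  also have "\<dots> = word_eval G f (u @ v)" using u v pres_hom_class[OF f rel] by simp
  also have "\<dots> = word_eval G f u \<otimes> word_eval G f v" using u v word_eval_append[OF f] by simp
  finally show "pres_hom G f (x \<otimes>\<^bsub>presented_group A R\<^esub> y) = pres_hom G f x \<otimes> pres_hom G f y"
    using pres_hom_class[OF f rel] u v by simp
qed

lemma pres_gen_in: "a \<in> A \<Longrightarrow> pres_gen A R a \<in> carrier (presented_group A R)"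
  by (simp add: pres_gen_def pres_class_in)

lemma pres_class_word_eval:
  assumes "u \<in> pres_words A"
  shows "pres_rel A R `` {u} = word_eval (presented_group A R) (pres_gen A R) u"
  using assms
proof (induct u)
  case Nil then show ?case by (simp add: pres_one)
next
  case (Cons p u)
  obtain a b where p: "p = (a, b)" by force
  interpret G: group "presented_group A R" by (rule presented_group_is_group)
  have a: "a \<in> A" "u \<in> pres_words A" using Cons p by auto
  have c1: "pres_rel A R `` {p # u} = pres_rel A R `` {[p]} \<otimes>\<^bsub>presented_group A R\<^esub> pres_rel A R `` {u}"
    using pres_mult[of "[p]" A u R] a p by simp
  have "pres_rel A R `` {[(a, b)]} = (if b then pres_gen A R a else inv\<^bsub>presented_group A R\<^esub> (pres_gen A R a))"
  proof (cases b)
    case True then show ?thesis by (simp add: pres_gen_def)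
  next
    case False
    have "pres_rel A R `` {[(a, False)]} \<otimes>\<^bsub>presented_group A R\<^esub> pres_gen A R a = \<one>\<^bsub>presented_group A R\<^esub>"
      unfolding pres_gen_def pres_one using a
      by (simp add: pres_mult pres_class_eq pres_rel.pr_cancel[where x="[]" and y="[]" and a=a and b=False, simplified])
    then have "pres_rel A R `` {[(a, False)]} = inv\<^bsub>presented_group A R\<^esub> (pres_gen A R a)"
      using G.inv_equality a pres_gen_in pres_class_in by (metis pres_words_Cons pres_words_Nil fst_conv)
    then show ?thesis using False by simp
  qed
  then show ?case using c1 Cons a p by (simp add: word_eval_Cons)
qed

lemma hom_word_eval:
  assumes "group G" "group H" "h \<in> hom G H" "g ` A \<subseteq> carrier G" "u \<in> pres_words A"
  shows "h (word_eval G g u) = word_eval H (h \<circ> g) u"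
  using assms(5)
proof (induct u)
  case Nil then show ?case using assms by (simp add: hom_one)
next
  case (Cons p u)
  interpret gh: group_hom G H h using assms by (simp add: group_hom_def group_hom_axioms_def)
  have c: "word_eval G g u \<in> carrier G" "g (fst p) \<in> carrier G"
    using Cons assms group.word_eval_closed[OF assms(1) assms(4)] by auto
  have i: "h (inv\<^bsub>G\<^esub> g (fst p)) = inv\<^bsub>H\<^esub> h (g (fst p))" using c gh.hom_inv by blast
  have m: "h (a \<otimes>\<^bsub>G\<^esub> word_eval G g u) = h a \<otimes>\<^bsub>H\<^esub> h (word_eval G g u)" if "a \<in> carrier G" for a
    using c that by simp
  show ?case
  proof (cases "snd p")
    case True then show ?thesis using Cons m c by (simp add: word_eval_Cons)
  next
    case False then show ?thesis using Cons m c i by (simp add: word_eval_Cons)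
  qed
qed

lemma pres_hom_unique:
  assumes "group H" "h1 \<in> hom (presented_group A R) H" "h2 \<in> hom (presented_group A R) H"
    "\<And>a. a \<in> A \<Longrightarrow> h1 (pres_gen A R a) = h2 (pres_gen A R a)"
    "x \<in> carrier (presented_group A R)"
  shows "h1 x = h2 x"
proof -
  obtain u where u: "u \<in> pres_words A" "x = pres_rel A R `` {u}"
    using assms(5) unfolding pres_carrier by (blast elim: quotientE)
  have g: "pres_gen A R ` A \<subseteq> carrier (presented_group A R)" by (rule image_subsetI, rule pres_gen_in)
  have e: "word_eval H (h1 \<circ> pres_gen A R) v = word_eval H (h2 \<circ> pres_gen A R) v"
    if "v \<in> pres_words A" for v
    using that
  proof (induct v)
    case Nil then show ?case by simp
  next
    case (Cons p v)
    then have "h1 (pres_gen A R (fst p)) = h2 (pres_gen A R (fst p))" using assms(4) by simp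
    then show ?case using Cons by (simp only: word_eval_Cons comp_apply pres_words_Cons)
  qed
  have "h1 x = word_eval H (h1 \<circ> pres_gen A R) u"
    using hom_word_eval[OF presented_group_is_group assms(1) assms(2) g u(1)]
    by (simp only: u pres_class_word_eval[OF u(1)])
  moreover have "h2 x = word_eval H (h2 \<circ> pres_gen A R) u"
    using hom_word_eval[OF presented_group_is_group assms(1) assms(3) g u(1)]
    by (simp only: u pres_class_word_eval[OF u(1)])
  ultimately show ?thesis using e[OF u(1)] by simp
qed



lemma (in group) inv_cancel_left[simp]: "x \<in> carrier G \<Longrightarrow> y \<in> carrier G \<Longrightarrow> inv x \<otimes> (x \<otimes> y) = y"
  by (simp add: m_assoc[symmetric])

lemma (in group) cancel_inv_left[simp]: "x \<in> carrier G \<Longrightarrow> y \<in> carrier G \<Longrightarrow> x \<otimes> (inv x \<otimes> y) = y"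
  by (simp add: m_assoc[symmetric])

lemma (in group) invol_cancel: "x \<otimes> x = \<one> \<Longrightarrow> x \<in> carrier G \<Longrightarrow> z \<in> carrier G \<Longrightarrow> x \<otimes> (x \<otimes> z) = z"
  by (simp add: m_assoc[symmetric])

lemma word_eval_cong:
  "(\<And>a. a \<in> A \<Longrightarrow> f a = g a) \<Longrightarrow> u \<in> pres_words A \<Longrightarrow> word_eval G f u = word_eval G g u"
  by (induct u) (auto simp: word_eval_Cons)

lemma (in group) word_eval_rep:
  "f s \<in> carrier G \<Longrightarrow> f t \<in> carrier G \<Longrightarrow>
   word_eval G f (concat (replicate k [(s, True), (t, True)])) = (f s \<otimes> f t) [^] k"
proof (induct k)
  case 0 then show ?case by simp
next
  case (Suc k)
  have "(f s \<otimes> f t) [^] Suc k = (f s \<otimes> f t) \<otimes> (f s \<otimes> f t) [^] k"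
    using Suc by (intro nat_pow_Suc2) simp
  then show ?case using Suc by (simp add: word_eval_Cons m_assoc)
qed

lemma (in group) conj_class_conj:
  assumes "x \<in> carrier G" "g \<in> carrier G"
  shows "conj_class G (inv g \<otimes> x \<otimes> g) = conj_class G x"
proof
  show "conj_class G (inv g \<otimes> x \<otimes> g) \<subseteq> conj_class G x"
  proof
    fix y assume "y \<in> conj_class G (inv g \<otimes> x \<otimes> g)"
    then obtain h where h: "h \<in> carrier G" "y = inv h \<otimes> (inv g \<otimes> x \<otimes> g) \<otimes> h"
      by (auto simp: conj_class_def)
    then have "y = inv (g \<otimes> h) \<otimes> x \<otimes> (g \<otimes> h)"
      using assms by (simp add: inv_mult_group m_assoc)
    then show "y \<in> conj_class G x" using h assms unfolding conj_class_def by blast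
  qed
next
  show "conj_class G x \<subseteq> conj_class G (inv g \<otimes> x \<otimes> g)"
  proof
    fix y assume "y \<in> conj_class G x"
    then obtain h where h: "h \<in> carrier G" "y = inv h \<otimes> x \<otimes> h"
      by (auto simp: conj_class_def)
    then have "y = inv (inv g \<otimes> h) \<otimes> (inv g \<otimes> x \<otimes> g) \<otimes> (inv g \<otimes> h)"
      using assms by (simp add: inv_mult_group m_assoc)
    then show "y \<in> conj_class G (inv g \<otimes> x \<otimes> g)" using h assms unfolding conj_class_def by blast
  qed
qed

lemma (in group) conj_class_self: "x \<in> carrier G \<Longrightarrow> x \<in> conj_class G x"
  unfolding conj_class_def by (rule CollectI, rule exI[of _ \<one>]) simp

locale cox =
  fixes S :: "'g set" and m :: "'g \<Rightarrow> 'g \<Rightarrow> enat"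
  assumes cs: "coxeter_system S m"
begin

abbreviation "cW \<equiv> coxeter_group S m"
abbreviation "cQ \<equiv> coxeter_quandle S m"
abbreviation "cAd \<equiv> adjoint_group S m"
abbreviation "gs \<equiv> pres_gen S (cox_rels S m)"
abbreviation "ee \<equiv> pres_gen cQ (ad_rels S m)"
abbreviation "phi \<equiv> ad_phi S m"

lemma W_group: "group cW"
  unfolding coxeter_group_def by (rule presented_group_is_group)

lemma Ad_group: "group cAd"
  unfolding adjoint_group_def by (rule presented_group_is_group)

sublocale W: group cW by (rule W_group)
sublocale Ad: group cAd by (rule Ad_group)

lemma gs_in: "s \<in> S \<Longrightarrow> gs s \<in> carrier cW"
  unfolding coxeter_group_def by (rule pres_gen_in)

lemma W_class_eval: "u \<in> pres_words S \<Longrightarrow> pres_rel S (cox_rels S m) `` {u} = word_eval cW gs u"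
  unfolding coxeter_group_def by (rule pres_class_word_eval)

lemma W_relator:
  assumes "r \<in> cox_rels S m" "r \<in> pres_words S"
  shows "word_eval cW gs r = \<one>\<^bsub>cW\<^esub>"
proof -
  have "(r, []) \<in> pres_rel S (cox_rels S m)"
    using pres_rel.pr_relator[where x="[]" and y="[]" and r=r and A=S and R="cox_rels S m"] assms by simp
  then have "pres_rel S (cox_rels S m) `` {r} = pres_rel S (cox_rels S m) `` {[]}"
    by (rule pres_class_eq)
  then show ?thesis using W_class_eval[OF assms(2)] by (simp add: coxeter_group_def pres_one)
qed

lemma W_braid:
  assumes "s \<in> S" "t \<in> S" "m s t = enat k"
  shows "(gs s \<otimes>\<^bsub>cW\<^esub> gs t) [^]\<^bsub>cW\<^esub> k = \<one>\<^bsub>cW\<^esub>"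
proof -
  let ?r = "concat (replicate k [(s, True), (t, True)])"
  have r: "?r \<in> cox_rels S m" using assms unfolding cox_rels_def by blast
  have w: "?r \<in> pres_words S" using assms by (auto simp: pres_words_def)
  show ?thesis using W_relator[OF r w] W.word_eval_rep[of gs s t k] gs_in assms by simp
qed

lemma gs_inv: "s \<in> S \<Longrightarrow> gs s \<otimes>\<^bsub>cW\<^esub> gs s = \<one>\<^bsub>cW\<^esub>"
  using W_braid[of s s 1] cs gs_in unfolding coxeter_system_def by (simp add: one_enat_def)

lemma Q_def': "x \<in> cQ \<longleftrightarrow> (\<exists>w s. w \<in> carrier cW \<and> s \<in> S \<and> x = inv\<^bsub>cW\<^esub> w \<otimes>\<^bsub>cW\<^esub> gs s \<otimes>\<^bsub>cW\<^esub> w)"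
  unfolding coxeter_quandle_def by blast

lemma Q_carrier: "x \<in> cQ \<Longrightarrow> x \<in> carrier cW"
  unfolding Q_def' using gs_in by auto

lemma Q_inv1: "x \<in> cQ \<Longrightarrow> x \<otimes>\<^bsub>cW\<^esub> x = \<one>\<^bsub>cW\<^esub>"
proof -
  assume "x \<in> cQ"
  then obtain w s where ws: "w \<in> carrier cW" "s \<in> S" "x = inv\<^bsub>cW\<^esub> w \<otimes>\<^bsub>cW\<^esub> gs s \<otimes>\<^bsub>cW\<^esub> w"
    unfolding Q_def' by blast
  have g: "gs s \<in> carrier cW" using ws gs_in by simp
  have "x \<otimes>\<^bsub>cW\<^esub> x = inv\<^bsub>cW\<^esub> w \<otimes>\<^bsub>cW\<^esub> (gs s \<otimes>\<^bsub>cW\<^esub> gs s) \<otimes>\<^bsub>cW\<^esub> w"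
    using ws g by (simp add: W.m_assoc)
  then show ?thesis using gs_inv ws g by simp
qed

lemma Q_inv: "x \<in> cQ \<Longrightarrow> inv\<^bsub>cW\<^esub> x = x"
  using Q_inv1 Q_carrier W.inv_equality by blast

lemma Q_conj: "x \<in> cQ \<Longrightarrow> g \<in> carrier cW \<Longrightarrow> inv\<^bsub>cW\<^esub> g \<otimes>\<^bsub>cW\<^esub> x \<otimes>\<^bsub>cW\<^esub> g \<in> cQ"
proof -
  assume x: "x \<in> cQ" and g: "g \<in> carrier cW"
  then obtain w s where ws: "w \<in> carrier cW" "s \<in> S" "x = inv\<^bsub>cW\<^esub> w \<otimes>\<^bsub>cW\<^esub> gs s \<otimes>\<^bsub>cW\<^esub> w"
    unfolding Q_def' by blast
  have "inv\<^bsub>cW\<^esub> g \<otimes>\<^bsub>cW\<^esub> x \<otimes>\<^bsub>cW\<^esub> g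
      = inv\<^bsub>cW\<^esub> (w \<otimes>\<^bsub>cW\<^esub> g) \<otimes>\<^bsub>cW\<^esub> gs s \<otimes>\<^bsub>cW\<^esub> (w \<otimes>\<^bsub>cW\<^esub> g)"
    using ws g gs_in by (simp add: W.m_assoc W.inv_mult_group)
  then show ?thesis unfolding Q_def' using ws g by blast
qed

lemma gs_Q: "s \<in> S \<Longrightarrow> gs s \<in> cQ"
  unfolding Q_def' using gs_in by (intro exI[of _ "\<one>\<^bsub>cW\<^esub>"]) auto

lemma Q_conj2: "x \<in> cQ \<Longrightarrow> y \<in> cQ \<Longrightarrow> y \<otimes>\<^bsub>cW\<^esub> x \<otimes>\<^bsub>cW\<^esub> y \<in> cQ"
  using Q_conj[of x y] Q_inv[of y] Q_carrier by simp

lemma ee_in: "x \<in> cQ \<Longrightarrow> ee x \<in> carrier cAd"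
  unfolding adjoint_group_def by (rule pres_gen_in)

lemma Ad_class_eval: "u \<in> pres_words cQ \<Longrightarrow> pres_rel cQ (ad_rels S m) `` {u} = word_eval cAd ee u"
  unfolding adjoint_group_def by (rule pres_class_word_eval)

lemma Ad_rel:
  assumes x: "x \<in> cQ" and y: "y \<in> cQ"
  shows "inv\<^bsub>cAd\<^esub> ee y \<otimes>\<^bsub>cAd\<^esub> ee x \<otimes>\<^bsub>cAd\<^esub> ee y = ee (y \<otimes>\<^bsub>cW\<^esub> x \<otimes>\<^bsub>cW\<^esub> y)"
proof -
  let ?z = "y \<otimes>\<^bsub>cW\<^esub> x \<otimes>\<^bsub>cW\<^esub> y"
  let ?r = "[(y, False), (x, True), (y, True), (?z, False)]"
  have z: "?z \<in> cQ" using Q_conj2 x y by blast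
  have r: "?r \<in> ad_rels S m" unfolding ad_rels_def quandle_op_def using x y by blast
  have w: "?r \<in> pres_words cQ" using x y z by simp
  have "(?r, []) \<in> pres_rel cQ (ad_rels S m)"
    using pres_rel.pr_relator[where x="[]" and y="[]" and r="?r" and A=cQ and R="ad_rels S m"] r w by simp
  then have "pres_rel cQ (ad_rels S m) `` {?r} = pres_rel cQ (ad_rels S m) `` {[]}"
    by (rule pres_class_eq)
  then have "word_eval cAd ee ?r = \<one>\<^bsub>cAd\<^esub>"
    using Ad_class_eval[OF w] by (simp add: adjoint_group_def pres_one)
  then have "inv\<^bsub>cAd\<^esub> ee y \<otimes>\<^bsub>cAd\<^esub> (ee x \<otimes>\<^bsub>cAd\<^esub> (ee y \<otimes>\<^bsub>cAd\<^esub> inv\<^bsub>cAd\<^esub> ee ?z)) = \<one>\<^bsub>cAd\<^esub>"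
    using ee_in x y z by (simp add: word_eval_Cons)
  then have "(inv\<^bsub>cAd\<^esub> ee y \<otimes>\<^bsub>cAd\<^esub> ee x \<otimes>\<^bsub>cAd\<^esub> ee y) \<otimes>\<^bsub>cAd\<^esub> inv\<^bsub>cAd\<^esub> ee ?z = \<one>\<^bsub>cAd\<^esub>"
    using ee_in x y z by (simp add: Ad.m_assoc)
  then show ?thesis using ee_in x y z
    by (metis Ad.inv_closed Ad.inv_equality Ad.inv_inv Ad.m_closed)
qed

lemma Ad_rel': 
  assumes x: "x \<in> cQ" and y: "y \<in> cQ"
  shows "ee y \<otimes>\<^bsub>cAd\<^esub> ee x \<otimes>\<^bsub>cAd\<^esub> inv\<^bsub>cAd\<^esub> ee y = ee (y \<otimes>\<^bsub>cW\<^esub> x \<otimes>\<^bsub>cW\<^esub> y)"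
proof -
  let ?z = "y \<otimes>\<^bsub>cW\<^esub> x \<otimes>\<^bsub>cW\<^esub> y"
  have z: "?z \<in> cQ" using Q_conj2 x y by blast
  have "y \<otimes>\<^bsub>cW\<^esub> ?z \<otimes>\<^bsub>cW\<^esub> y = (y \<otimes>\<^bsub>cW\<^esub> y) \<otimes>\<^bsub>cW\<^esub> x \<otimes>\<^bsub>cW\<^esub> (y \<otimes>\<^bsub>cW\<^esub> y)"
    using x y Q_carrier by (simp add: W.m_assoc)
  also have "\<dots> = x" using x y Q_carrier Q_inv1 by simp
  finally have eq: "inv\<^bsub>cAd\<^esub> ee y \<otimes>\<^bsub>cAd\<^esub> ee ?z \<otimes>\<^bsub>cAd\<^esub> ee y = ee x"
    using Ad_rel[OF z y] by simp
  have "ee y \<otimes>\<^bsub>cAd\<^esub> ee x \<otimes>\<^bsub>cAd\<^esub> inv\<^bsub>cAd\<^esub> ee y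
     = ee y \<otimes>\<^bsub>cAd\<^esub> (inv\<^bsub>cAd\<^esub> ee y \<otimes>\<^bsub>cAd\<^esub> ee ?z \<otimes>\<^bsub>cAd\<^esub> ee y) \<otimes>\<^bsub>cAd\<^esub> inv\<^bsub>cAd\<^esub> ee y"
    by (simp only: eq)
  also have "\<dots> = ee ?z" using ee_in x y z by (simp add: Ad.m_assoc)
  finally show ?thesis .
qed

end



context cox
begin

lemma phi_pres_hom: "phi = pres_hom cW id"
  by (rule ext) (simp add: ad_phi_def pres_hom_def)

lemma phi_rel:
  assumes "r \<in> ad_rels S m" "r \<in> pres_words cQ"
  shows "word_eval cW id r = \<one>\<^bsub>cW\<^esub>"
proof -
  obtain x y where xy: "x \<in> cQ" "y \<in> cQ"
    "r = [(y, False), (x, True), (y, True), (quandle_op cW x y, False)]"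
    using assms(1) unfolding ad_rels_def by blast
  have z: "y \<otimes>\<^bsub>cW\<^esub> x \<otimes>\<^bsub>cW\<^esub> y \<in> cQ" using Q_conj2 xy by blast
  have c: "x \<in> carrier cW" "y \<in> carrier cW" using xy Q_carrier by auto
  have "word_eval cW id r = y \<otimes>\<^bsub>cW\<^esub> (x \<otimes>\<^bsub>cW\<^esub> (y \<otimes>\<^bsub>cW\<^esub> (y \<otimes>\<^bsub>cW\<^esub> x \<otimes>\<^bsub>cW\<^esub> y)))"
    using xy z c by (simp add: word_eval_Cons quandle_op_def Q_inv)
  also have "\<dots> = \<one>\<^bsub>cW\<^esub>" using c Q_inv1 xy by (simp add: W.m_assoc W.invol_cancel)
  finally show ?thesis .
qed

lemma phi_hom: "phi \<in> hom cAd cW"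
  unfolding phi_pres_hom adjoint_group_def
  by (rule W.pres_hom_hom) (auto simp: Q_carrier phi_rel)

lemma phi_ee: "x \<in> cQ \<Longrightarrow> phi (ee x) = x"
proof -
  assume x: "x \<in> cQ"
  have "phi (ee x) = word_eval cW id [(x, True)]"
    unfolding phi_pres_hom pres_gen_def
    by (rule W.pres_hom_class) (auto simp: Q_carrier phi_rel x)
  then show ?thesis using x Q_carrier by (simp add: word_eval_Cons)
qed

sublocale phiH: group_hom cAd cW phi
  by (simp add: group_hom_def group_hom_axioms_def phi_hom W_group Ad_group)

lemma ee_words: "(ee \<circ> gs) ` S \<subseteq> carrier cAd"
  using ee_in gs_Q by auto

lemma Ad_carrier_word:
  assumes "g \<in> carrier cAd"
  obtains u where "u \<in> pres_words cQ" "g = word_eval cAd ee u"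
proof -
  obtain u where u: "u \<in> pres_words cQ" "g = pres_rel cQ (ad_rels S m) `` {u}"
    using assms unfolding adjoint_group_def pres_carrier by (blast elim: quotientE)
  then show ?thesis using that Ad_class_eval by blast
qed

lemma ee_img: "ee ` cQ \<subseteq> carrier cAd"
  by (rule image_subsetI, rule ee_in)

lemma conj_formula_word:
  assumes "u \<in> pres_words cQ"
  shows "\<And>x. x \<in> cQ \<Longrightarrow> inv\<^bsub>cAd\<^esub> (word_eval cAd ee u) \<otimes>\<^bsub>cAd\<^esub> ee x \<otimes>\<^bsub>cAd\<^esub> word_eval cAd ee u
     = ee (inv\<^bsub>cW\<^esub> (phi (word_eval cAd ee u)) \<otimes>\<^bsub>cW\<^esub> x \<otimes>\<^bsub>cW\<^esub> phi (word_eval cAd ee u))"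
  using assms
proof (induct u)
  case Nil then show ?case using ee_in Q_carrier by simp
next
  case (Cons p u x)
  obtain y b where p: "p = (y, b)" by force
  have y: "y \<in> cQ" and u: "u \<in> pres_words cQ" using Cons p by auto
  let ?g = "word_eval cAd ee u"
  let ?L = "(if b then ee y else inv\<^bsub>cAd\<^esub> (ee y))"
  have g: "?g \<in> carrier cAd" using Ad.word_eval_closed[OF ee_img u] .
  have L: "?L \<in> carrier cAd" using ee_in y by simp
  have yc: "y \<in> carrier cW" using y Q_carrier by simp
  have phiL: "phi ?L = y" using phi_ee y Q_inv ee_in by auto
  have conjL: "inv\<^bsub>cAd\<^esub> ?L \<otimes>\<^bsub>cAd\<^esub> ee x \<otimes>\<^bsub>cAd\<^esub> ?L = ee (y \<otimes>\<^bsub>cW\<^esub> x \<otimes>\<^bsub>cW\<^esub> y)"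
    using Ad_rel[OF Cons(2) y] Ad_rel'[OF Cons(2) y] ee_in y by auto
  have xy: "y \<otimes>\<^bsub>cW\<^esub> x \<otimes>\<^bsub>cW\<^esub> y \<in> cQ" using Q_conj2 Cons(2) y by blast
  have ev: "word_eval cAd ee (p # u) = ?L \<otimes>\<^bsub>cAd\<^esub> ?g" using p by (simp add: word_eval_Cons)
  have "inv\<^bsub>cAd\<^esub> (?L \<otimes>\<^bsub>cAd\<^esub> ?g) \<otimes>\<^bsub>cAd\<^esub> ee x \<otimes>\<^bsub>cAd\<^esub> (?L \<otimes>\<^bsub>cAd\<^esub> ?g)
      = inv\<^bsub>cAd\<^esub> ?g \<otimes>\<^bsub>cAd\<^esub> (inv\<^bsub>cAd\<^esub> ?L \<otimes>\<^bsub>cAd\<^esub> ee x \<otimes>\<^bsub>cAd\<^esub> ?L) \<otimes>\<^bsub>cAd\<^esub> ?g"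
    using g L ee_in Cons(2) by (simp add: Ad.inv_mult_group Ad.m_assoc)
  also have "\<dots> = inv\<^bsub>cAd\<^esub> ?g \<otimes>\<^bsub>cAd\<^esub> ee (y \<otimes>\<^bsub>cW\<^esub> x \<otimes>\<^bsub>cW\<^esub> y) \<otimes>\<^bsub>cAd\<^esub> ?g"
    by (simp only: conjL)
  also have "\<dots> = ee (inv\<^bsub>cW\<^esub> (phi ?g) \<otimes>\<^bsub>cW\<^esub> (y \<otimes>\<^bsub>cW\<^esub> x \<otimes>\<^bsub>cW\<^esub> y) \<otimes>\<^bsub>cW\<^esub> phi ?g)"
    using Cons(1)[OF xy u] .
  also have "inv\<^bsub>cW\<^esub> (phi ?g) \<otimes>\<^bsub>cW\<^esub> (y \<otimes>\<^bsub>cW\<^esub> x \<otimes>\<^bsub>cW\<^esub> y) \<otimes>\<^bsub>cW\<^esub> phi ?g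
      = inv\<^bsub>cW\<^esub> (phi (?L \<otimes>\<^bsub>cAd\<^esub> ?g)) \<otimes>\<^bsub>cW\<^esub> x \<otimes>\<^bsub>cW\<^esub> phi (?L \<otimes>\<^bsub>cAd\<^esub> ?g)"
  proof -
    have pg: "phi ?g \<in> carrier cW" using g by simp
    have "phi (?L \<otimes>\<^bsub>cAd\<^esub> ?g) = y \<otimes>\<^bsub>cW\<^esub> phi ?g" using g L phiL by simp
    then show ?thesis using pg yc Cons(2) Q_carrier Q_inv[OF y]
      by (simp add: W.inv_mult_group W.m_assoc)
  qed
  finally show ?case using ev by simp
qed

lemma conj_formula:
  assumes "g \<in> carrier cAd" "x \<in> cQ"
  shows "inv\<^bsub>cAd\<^esub> g \<otimes>\<^bsub>cAd\<^esub> ee x \<otimes>\<^bsub>cAd\<^esub> g = ee (inv\<^bsub>cW\<^esub> (phi g) \<otimes>\<^bsub>cW\<^esub> x \<otimes>\<^bsub>cW\<^esub> phi g)"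
proof -
  obtain u where "u \<in> pres_words cQ" "g = word_eval cAd ee u"
    using Ad_carrier_word[OF assms(1)] by blast
  then show ?thesis using conj_formula_word assms(2) by simp
qed

lemma Ad_hom_unique:
  assumes "group H" "h1 \<in> hom cAd H" "h2 \<in> hom cAd H"
    "\<And>x. x \<in> cQ \<Longrightarrow> h1 (ee x) = h2 (ee x)" "g \<in> carrier cAd"
  shows "h1 g = h2 g"
  using pres_hom_unique[of H h1 cQ "ad_rels S m" h2 g] assms unfolding adjoint_group_def by blast

lemma CW_subgroup: "subgroup (C_W S m) cAd"
  unfolding C_W_def by (rule phiH.subgroup_kernel)

lemma CW_mem: "c \<in> C_W S m \<longleftrightarrow> c \<in> carrier cAd \<and> phi c = \<one>\<^bsub>cW\<^esub>"
  unfolding C_W_def kernel_def by simp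

lemma CW_central:
  assumes c: "c \<in> C_W S m" and g: "g \<in> carrier cAd"
  shows "c \<otimes>\<^bsub>cAd\<^esub> g = g \<otimes>\<^bsub>cAd\<^esub> c"
proof -
  have cc: "c \<in> carrier cAd" "phi c = \<one>\<^bsub>cW\<^esub>" using c CW_mem by auto
  have h1: "(\<lambda>g. inv\<^bsub>cAd\<^esub> c \<otimes>\<^bsub>cAd\<^esub> g \<otimes>\<^bsub>cAd\<^esub> c) \<in> hom cAd cAd"
    using cc by (intro homI) (auto simp: Ad.m_assoc)
  have h2: "(\<lambda>g. g) \<in> hom cAd cAd" by (intro homI) auto
  have "inv\<^bsub>cAd\<^esub> c \<otimes>\<^bsub>cAd\<^esub> g \<otimes>\<^bsub>cAd\<^esub> c = g"
    using Ad_hom_unique[OF Ad_group h1 h2 _ g] conj_formula[OF cc(1)] cc Q_carrier by simp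
  then show ?thesis using cc g
    by (metis Ad.inv_closed Ad.m_assoc Ad.m_closed Ad.cancel_inv_left)
qed

abbreviation "cC \<equiv> cAd\<lparr>carrier := C_W S m\<rparr>"

lemma C_comm_group: "comm_group cC"
proof -
  interpret G: group cC using Ad.subgroup_imp_group[OF CW_subgroup] .
  show ?thesis
    by (rule G.group_comm_groupI) (simp add: CW_central CW_mem)
qed

end



definition zf :: "('k \<Rightarrow> int) monoid" where
  "zf = \<lparr>carrier = UNIV, monoid.mult = (\<lambda>f g k. f k + g k), monoid.one = (\<lambda>k. 0)\<rparr>"

lemma zf_simps[simp]: "carrier zf = UNIV" "x \<otimes>\<^bsub>zf\<^esub> y = (\<lambda>k. x k + y k)" "\<one>\<^bsub>zf\<^esub> = (\<lambda>k. 0)"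
  by (auto simp: zf_def)

lemma zf_group: "group zf"
  by (rule groupI) (auto simp: fun_eq_iff intro: exI[of _ "\<lambda>k. - x k" for x])

lemma zf_inv[simp]: "inv\<^bsub>zf\<^esub> x = (\<lambda>k. - x k)"
  by (rule group.inv_equality[OF zf_group]) auto

lemma zf_nat_pow: "x [^]\<^bsub>zf\<^esub> (n::nat) = (\<lambda>k. int n * x k)"
  by (induct n) (auto simp: algebra_simps)

lemma zf_int_pow[simp]: "x [^]\<^bsub>zf\<^esub> (n::int) = (\<lambda>k. n * x k)"
  by (auto simp: int_pow_def2 zf_nat_pow)

context cox
begin

definition eps_gen :: "('g \<times> bool) list set \<Rightarrow> ('g \<times> bool) list set set \<Rightarrow> int" where
  "eps_gen x = (\<lambda>k. if k = conj_class cW x then 1 else 0)"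

definition eps where "eps = pres_hom zf eps_gen"

lemma eps_rel:
  assumes "r \<in> ad_rels S m" "r \<in> pres_words cQ"
  shows "word_eval zf eps_gen r = \<one>\<^bsub>zf\<^esub>"
proof -
  obtain x y where xy: "x \<in> cQ" "y \<in> cQ"
    "r = [(y, False), (x, True), (y, True), (quandle_op cW x y, False)]"
    using assms(1) unfolding ad_rels_def by blast
  have c: "x \<in> carrier cW" "y \<in> carrier cW" using xy Q_carrier by auto
  have "conj_class cW (y \<otimes>\<^bsub>cW\<^esub> x \<otimes>\<^bsub>cW\<^esub> y) = conj_class cW x"
    using W.conj_class_conj[OF c] Q_inv[OF xy(2)] by simp
  then show ?thesis using xy by (simp add: word_eval_Cons quandle_op_def eps_gen_def)
qed

lemma eps_hom: "eps \<in> hom cAd zf"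
  unfolding eps_def adjoint_group_def
  by (rule group.pres_hom_hom[OF zf_group]) (auto simp: eps_rel)

lemma eps_ee: "x \<in> cQ \<Longrightarrow> eps (ee x) = eps_gen x"
proof -
  assume x: "x \<in> cQ"
  have "eps (ee x) = word_eval zf eps_gen [(x, True)]"
    unfolding eps_def pres_gen_def
    by (rule group.pres_hom_class[OF zf_group]) (auto simp: eps_rel x)
  then show ?thesis by (simp add: word_eval_Cons)
qed

sublocale epsH: group_hom cAd zf eps
  by (simp add: group_hom_def group_hom_axioms_def eps_hom zf_group Ad_group)

definition KK where "KK = conj_class cW ` cQ"

lemma KK_finite: "finite KK"
proof -
  have "KK \<subseteq> (\<lambda>s. conj_class cW (gs s)) ` S"
  proof
    fix k assume "k \<in> KK"
    then obtain x where x: "x \<in> cQ" "k = conj_class cW x" unfolding KK_def by blast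
    then obtain w s where ws: "w \<in> carrier cW" "s \<in> S" "x = inv\<^bsub>cW\<^esub> w \<otimes>\<^bsub>cW\<^esub> gs s \<otimes>\<^bsub>cW\<^esub> w"
      unfolding Q_def' by blast
    then have "k = conj_class cW (gs s)" using x W.conj_class_conj gs_in by simp
    then show "k \<in> (\<lambda>s. conj_class cW (gs s)) ` S" using ws by blast
  qed
  moreover have "finite S" using cs unfolding coxeter_system_def by simp
  ultimately show ?thesis by (meson finite_surj)
qed

definition rep where "rep k = (SOME x. x \<in> cQ \<and> conj_class cW x = k)"

lemma rep: "k \<in> KK \<Longrightarrow> rep k \<in> cQ \<and> conj_class cW (rep k) = k"
  unfolding rep_def KK_def by (rule someI_ex) blast

definition zz where "zz k = ee (rep k) \<otimes>\<^bsub>cAd\<^esub> ee (rep k)"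

lemma sq_CW: "x \<in> cQ \<Longrightarrow> ee x \<otimes>\<^bsub>cAd\<^esub> ee x \<in> C_W S m"
  using ee_in Q_inv1 phi_ee by (simp add: CW_mem)

lemma zz_CW: "k \<in> KK \<Longrightarrow> zz k \<in> C_W S m"
  using rep sq_CW unfolding zz_def by blast

lemma eps_sq: "x \<in> cQ \<Longrightarrow> eps (ee x \<otimes>\<^bsub>cAd\<^esub> ee x) = (\<lambda>k. if k = conj_class cW x then 2 else 0)"
  using ee_in eps_ee by (simp add: eps_gen_def fun_eq_iff)

lemma eps_zz: "k \<in> KK \<Longrightarrow> eps (zz k) = (\<lambda>k'. if k' = k then 2 else 0)"
  using rep eps_sq unfolding zz_def by auto

lemma W_onto:
  assumes "w \<in> carrier cW"
  obtains g where "g \<in> carrier cAd" "phi g = w"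
proof -
  obtain u where u: "u \<in> pres_words S" "w = pres_rel S (cox_rels S m) `` {u}"
    using assms unfolding coxeter_group_def pres_carrier by (blast elim: quotientE)
  let ?g = "word_eval cAd (ee \<circ> gs) u"
  have g: "?g \<in> carrier cAd" using Ad.word_eval_closed[OF ee_words u(1)] .
  have "phi ?g = word_eval cW (phi \<circ> (ee \<circ> gs)) u"
    using hom_word_eval[OF Ad_group W_group phi_hom ee_words u(1)] .
  also have "\<dots> = word_eval cW gs u"
    by (rule word_eval_cong[OF _ u(1)]) (simp add: phi_ee gs_Q)
  also have "\<dots> = w" using W_class_eval u by simp
  finally show ?thesis using that g by blast
qed

lemma sq_eq:
  assumes x: "x \<in> cQ" and y: "y \<in> cQ" and cl: "conj_class cW x = conj_class cW y"
  shows "ee x \<otimes>\<^bsub>cAd\<^esub> ee x = ee y \<otimes>\<^bsub>cAd\<^esub> ee y"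
proof -
  have "x \<in> conj_class cW x" using W.conj_class_self Q_carrier x by blast
  then have "x \<in> conj_class cW y" using cl by simp
  then obtain w where w: "w \<in> carrier cW" "x = inv\<^bsub>cW\<^esub> w \<otimes>\<^bsub>cW\<^esub> y \<otimes>\<^bsub>cW\<^esub> w"
    unfolding conj_class_def by blast
  obtain g where g: "g \<in> carrier cAd" "phi g = w" using W_onto[OF w(1)] by blast
  have ex: "ee x = inv\<^bsub>cAd\<^esub> g \<otimes>\<^bsub>cAd\<^esub> ee y \<otimes>\<^bsub>cAd\<^esub> g" using conj_formula[OF g(1) y] g w by simp
  have yy: "ee y \<otimes>\<^bsub>cAd\<^esub> ee y \<in> C_W S m" using sq_CW y .
  have "ee x \<otimes>\<^bsub>cAd\<^esub> ee x = inv\<^bsub>cAd\<^esub> g \<otimes>\<^bsub>cAd\<^esub> (ee y \<otimes>\<^bsub>cAd\<^esub> ee y) \<otimes>\<^bsub>cAd\<^esub> g"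
    using ex g ee_in y by (simp add: Ad.m_assoc)
  also have "\<dots> = inv\<^bsub>cAd\<^esub> g \<otimes>\<^bsub>cAd\<^esub> (g \<otimes>\<^bsub>cAd\<^esub> (ee y \<otimes>\<^bsub>cAd\<^esub> ee y))"
    using CW_central[OF yy g(1)] g ee_in y by (simp add: Ad.m_assoc)
  also have "\<dots> = ee y \<otimes>\<^bsub>cAd\<^esub> ee y" using g ee_in y by simp
  finally show ?thesis .
qed

lemma sq_zz: "x \<in> cQ \<Longrightarrow> ee x \<otimes>\<^bsub>cAd\<^esub> ee x = zz (conj_class cW x)"
proof -
  assume x: "x \<in> cQ"
  then have k: "conj_class cW x \<in> KK" unfolding KK_def by blast
  show ?thesis using sq_eq[OF x] rep[OF k] unfolding zz_def by simp
qed

end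



context cox
begin

sublocale C: comm_group cC by (rule C_comm_group)

lemma C_carrier[simp]: "carrier cC = C_W S m" by simp
lemma C_mult[simp]: "x \<otimes>\<^bsub>cC\<^esub> y = x \<otimes>\<^bsub>cAd\<^esub> y" by simp
lemma C_one[simp]: "\<one>\<^bsub>cC\<^esub> = \<one>\<^bsub>cAd\<^esub>" by simp

lemma C_pow: "g \<in> C_W S m \<Longrightarrow> g [^]\<^bsub>cC\<^esub> (n::int) = g [^]\<^bsub>cAd\<^esub> n"
  using Ad.int_pow_consistent[OF CW_subgroup] by simp

lemma CW_carrier: "g \<in> C_W S m \<Longrightarrow> g \<in> carrier cAd"
  using CW_mem by simp

lemma eps_pow: "g \<in> C_W S m \<Longrightarrow> eps (g [^]\<^bsub>cC\<^esub> (n::int)) = (\<lambda>k. n * eps g k)"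
  using C_pow epsH.hom_int_pow CW_carrier by simp

lemma eps_finprod:
  assumes "finite A" "f \<in> A \<rightarrow> C_W S m"
  shows "eps (finprod cC f A) k = (\<Sum>a\<in>A. eps (f a) k)"
  using assms
proof (induct A rule: finite_induct)
  case empty then show ?case by simp
next
  case (insert a A)
  have fa: "f a \<in> C_W S m" and fA: "f \<in> A \<rightarrow> C_W S m" using insert by auto
  have "finprod cC f (insert a A) = f a \<otimes>\<^bsub>cAd\<^esub> finprod cC f A"
    using C.finprod_insert[OF insert(1,2)] fa fA by simp
  moreover have "finprod cC f A \<in> C_W S m" using C.finprod_closed[of f A] fA by simp
  ultimately have "eps (finprod cC f (insert a A)) = eps (f a) \<otimes>\<^bsub>zf\<^esub> eps (finprod cC f A)"
    using fa CW_carrier by simp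
  then show ?case using insert fA by simp
qed

lemma pow_CW: "x \<in> C_W S m \<Longrightarrow> x [^]\<^bsub>cC\<^esub> (n::int) \<in> C_W S m"
  using C.int_pow_closed[of x n] by simp

lemma mult_CW: "x \<in> C_W S m \<Longrightarrow> y \<in> C_W S m \<Longrightarrow> x \<otimes>\<^bsub>cAd\<^esub> y \<in> C_W S m"
  using C.m_closed[of x y] by simp

definition Nf :: "(('g \<times> bool) list set set \<Rightarrow> int) \<Rightarrow> _" where
  "Nf a = finprod cC (\<lambda>k. zz k [^]\<^bsub>cC\<^esub> a k) KK"

lemma Nf_Pi: "(\<lambda>k. zz k [^]\<^bsub>cC\<^esub> (a k :: int)) \<in> KK \<rightarrow> C_W S m"
  using zz_CW pow_CW by auto

lemma Nf_CW: "Nf a \<in> C_W S m"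
  unfolding Nf_def using C.finprod_closed[of _ KK] Nf_Pi by simp

lemma Nf_mult: "Nf a \<otimes>\<^bsub>cAd\<^esub> Nf b = Nf (\<lambda>k. a k + b k)"
proof -
  have "Nf (\<lambda>k. a k + b k) = finprod cC (\<lambda>k. zz k [^]\<^bsub>cC\<^esub> a k \<otimes>\<^bsub>cC\<^esub> zz k [^]\<^bsub>cC\<^esub> b k) KK"
    unfolding Nf_def
    by (rule C.finprod_cong') (use zz_CW C.int_pow_mult pow_CW mult_CW in auto)
  also have "\<dots> = Nf a \<otimes>\<^bsub>cC\<^esub> Nf b"
    unfolding Nf_def by (rule C.finprod_multf) (use Nf_Pi in auto)
  finally show ?thesis by simp
qed

lemma Nf_zero: "Nf (\<lambda>k. 0) = \<one>\<^bsub>cAd\<^esub>"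
  unfolding Nf_def using C.finprod_one_eqI[of KK "\<lambda>k. zz k [^]\<^bsub>cC\<^esub> (0::int)"] by simp

lemma Nf_zero': "(\<And>k. k \<in> KK \<Longrightarrow> a k = 0) \<Longrightarrow> Nf a = \<one>\<^bsub>cAd\<^esub>"
  unfolding Nf_def using C.finprod_one_eqI[of KK "\<lambda>k. zz k [^]\<^bsub>cC\<^esub> a k"] by simp

lemma eps_Nf: "k0 \<in> KK \<Longrightarrow> eps (Nf a) k0 = 2 * a k0"
proof -
  assume k0: "k0 \<in> KK"
  have "eps (Nf a) k0 = (\<Sum>k\<in>KK. eps (zz k [^]\<^bsub>cC\<^esub> a k) k0)"
    unfolding Nf_def using eps_finprod[OF KK_finite Nf_Pi] by simp
  also have "\<dots> = (\<Sum>k\<in>KK. if k = k0 then 2 * a k else 0)"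
    by (rule sum.cong) (auto simp: eps_pow zz_CW eps_zz)
  also have "\<dots> = 2 * a k0" using k0 KK_finite by (simp add: sum.delta')
  finally show ?thesis .
qed

definition NN where "NN = range Nf"

lemma NN_subgroup: "subgroup NN cAd"
proof (rule Ad.subgroupI)
  show "NN \<subseteq> carrier cAd" unfolding NN_def using Nf_CW CW_carrier by auto
  show "NN \<noteq> {}" unfolding NN_def by simp
next
  fix x assume "x \<in> NN"
  then obtain a where a: "x = Nf a" unfolding NN_def by blast
  have "Nf (\<lambda>k. - a k) \<otimes>\<^bsub>cAd\<^esub> Nf a = \<one>\<^bsub>cAd\<^esub>" using Nf_mult Nf_zero by simp
  then have "inv\<^bsub>cAd\<^esub> x = Nf (\<lambda>k. - a k)"
    using a Nf_CW CW_carrier Ad.inv_equality by blast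
  then show "inv\<^bsub>cAd\<^esub> x \<in> NN" unfolding NN_def by simp
next
  fix x y assume "x \<in> NN" "y \<in> NN"
  then show "x \<otimes>\<^bsub>cAd\<^esub> y \<in> NN" unfolding NN_def using Nf_mult by auto
qed

lemma NN_CW: "NN \<subseteq> C_W S m"
  unfolding NN_def using Nf_CW by auto

lemma NN_normal: "NN \<lhd> cAd"
proof -
  have "x \<otimes>\<^bsub>cAd\<^esub> h \<otimes>\<^bsub>cAd\<^esub> inv\<^bsub>cAd\<^esub> x \<in> NN" if "x \<in> carrier cAd" "h \<in> NN" for x h
  proof -
    have h: "h \<in> C_W S m" "h \<in> carrier cAd" using that NN_CW CW_carrier by auto
    have "x \<otimes>\<^bsub>cAd\<^esub> h \<otimes>\<^bsub>cAd\<^esub> inv\<^bsub>cAd\<^esub> x = h \<otimes>\<^bsub>cAd\<^esub> x \<otimes>\<^bsub>cAd\<^esub> inv\<^bsub>cAd\<^esub> x"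
      using CW_central[OF h(1) that(1)] by simp
    also have "\<dots> = h" using h that by (simp add: Ad.m_assoc)
    finally show ?thesis using that by simp
  qed
  then show ?thesis using Ad.normal_inv_iff NN_subgroup by blast
qed

lemma zz_NN: "k \<in> KK \<Longrightarrow> zz k \<in> NN"
proof -
  assume k: "k \<in> KK"
  have "(\<lambda>j. zz j [^]\<^bsub>cC\<^esub> (if j = k then 1 else 0::int)) = (\<lambda>j. if k = j then zz j else \<one>\<^bsub>cC\<^esub>)"
    using zz_CW[OF k] by (auto simp: fun_eq_iff)
  then have "Nf (\<lambda>j. if j = k then 1 else 0) = finprod cC (\<lambda>j. if k = j then zz j else \<one>\<^bsub>cC\<^esub>) KK"
    unfolding Nf_def by simp
  also have "\<dots> = zz k"
    using C.finprod_singleton[OF k KK_finite, of zz] zz_CW by auto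
  finally show ?thesis unfolding NN_def by (metis rangeI)
qed

lemma sq_NN: "x \<in> cQ \<Longrightarrow> ee x \<otimes>\<^bsub>cAd\<^esub> ee x \<in> NN"
  using sq_zz zz_NN unfolding KK_def by simp

end



definition pw :: "'a list \<Rightarrow> ('a \<times> bool) list" where
  "pw xs = map (\<lambda>x. (x, True)) xs"

lemma pw_simps[simp]: "pw [] = []" "pw (x # xs) = (x, True) # pw xs"
  by (auto simp: pw_def)

lemma pw_append: "pw (xs @ ys) = pw xs @ pw ys"
  by (auto simp: pw_def)

lemma pw_words[simp]: "pw xs \<in> pres_words A \<longleftrightarrow> set xs \<subseteq> A"
  by (auto simp: pw_def pres_words_def)

lemma (in group) ev_pw_Cons: "word_eval G f (pw (x # xs)) = f x \<otimes> word_eval G f (pw xs)"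
  by (simp add: word_eval_Cons)

lemma (in group) ev_pw_closed: "f ` set xs \<subseteq> carrier G \<Longrightarrow> word_eval G f (pw xs) \<in> carrier G"
  by (induct xs) (auto simp: word_eval_Cons)

lemma (in group) ev_pw_append:
  "f ` set xs \<subseteq> carrier G \<Longrightarrow> f ` set ys \<subseteq> carrier G \<Longrightarrow>
   word_eval G f (pw (xs @ ys)) = word_eval G f (pw xs) \<otimes> word_eval G f (pw ys)"
  by (induct xs) (auto simp: word_eval_Cons m_assoc ev_pw_closed pw_append)

lemma (in group) ev_pw_rev:
  assumes "\<And>z. z \<in> set xs \<Longrightarrow> f z \<in> carrier G \<and> f z \<otimes> f z = \<one>"
  shows "inv (word_eval G f (pw xs)) = word_eval G f (pw (rev xs))"
  using assms
proof (induct xs)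
  case Nil then show ?case by simp
next
  case (Cons x xs)
  have fx: "f x \<in> carrier G" "f x \<otimes> f x = \<one>" using Cons by auto
  have c: "f ` set xs \<subseteq> carrier G" using Cons by auto
  have ix: "inv (f x) = f x" using fx inv_equality by blast
  have "inv (word_eval G f (pw (x # xs))) = inv (word_eval G f (pw xs)) \<otimes> inv (f x)"
    using fx c by (simp add: word_eval_Cons inv_mult_group ev_pw_closed)
  also have "\<dots> = word_eval G f (pw (rev xs)) \<otimes> f x" using Cons ix by simp
  also have "\<dots> = word_eval G f (pw (rev xs @ [x]))"
    using c fx ev_pw_append[where xs="rev xs" and ys="[x]" and f=f] by (simp add: word_eval_Cons)
  finally show ?case by simp
qed

fun alt :: "'a \<Rightarrow> 'a \<Rightarrow> nat \<Rightarrow> 'a list" where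
  "alt x y 0 = []"
| "alt x y (Suc n) = x # alt y x n"

lemma alt_set: "set (alt x y n) \<subseteq> {x, y}"
  by (induct n arbitrary: x y) auto

lemma alt_add: "alt x y (n1 + n2) = alt x y n1 @ (if even n1 then alt x y n2 else alt y x n2)"
  by (induct n1 arbitrary: x y) auto

lemma alt_Suc_snoc: "alt x y (Suc n) = alt x y n @ (if even n then [x] else [y])"
  using alt_add[of x y n 1] by simp

lemma alt_rev: "rev (alt x y n) = (if even n then alt y x n else alt x y n)"
proof (induct n arbitrary: x y)
  case 0 then show ?case by simp
next
  case (Suc n)
  have r: "rev (alt x y (Suc n)) = rev (alt y x n) @ [x]" by simp
  show ?case
  proof (cases "even n")
    case True
    then have "rev (alt x y (Suc n)) = alt x y n @ [x]" using r Suc[of y x] by simp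
    also have "\<dots> = alt x y (Suc n)" using alt_Suc_snoc[of x y n] True by simp
    finally show ?thesis using True by simp
  next
    case False
    then have "rev (alt x y (Suc n)) = alt y x n @ [x]" using r Suc[of y x] by simp
    also have "\<dots> = alt y x (Suc n)" using alt_Suc_snoc[of y x n] False by simp
    finally show ?thesis using False by simp
  qed
qed

lemma alt_odd: "alt x y (Suc (2 * j)) = alt x y j @ [if even j then x else y] @ rev (alt x y j)"
proof -
  have "alt x y (Suc (2 * j)) = alt x y (j + Suc j)" by (simp add: mult_2)
  also have "\<dots> = alt x y j @ (if even j then alt x y (Suc j) else alt y x (Suc j))"
    by (rule alt_add)
  finally show ?thesis by (simp add: alt_rev)
qed

lemma (in group) ev_alt_double:
  "f x \<in> carrier G \<Longrightarrow> f y \<in> carrier G \<Longrightarrow>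
   word_eval G f (pw (alt x y (2 * k))) = (f x \<otimes> f y) [^] k"
proof (induct k)
  case 0 then show ?case by simp
next
  case (Suc k)
  have "alt x y (2 * Suc k) = x # y # alt x y (2 * k)" by (simp add: numeral_2_eq_2)
  moreover have "(f x \<otimes> f y) [^] Suc k = (f x \<otimes> f y) \<otimes> (f x \<otimes> f y) [^] k"
    using Suc by (intro nat_pow_Suc2) simp
  ultimately show ?case using Suc by (simp add: word_eval_Cons m_assoc)
qed

lemma (in group) braid_iff:
  assumes x: "f x \<in> carrier G" "f x \<otimes> f x = \<one>" and y: "f y \<in> carrier G" "f y \<otimes> f y = \<one>"
  shows "word_eval G f (pw (alt x y k)) = word_eval G f (pw (alt y x k))
     \<longleftrightarrow> (f x \<otimes> f y) [^] k = \<one>"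
proof -
  let ?P = "word_eval G f (pw (alt x y k))" and ?Q = "word_eval G f (pw (alt y x k))"
  have sx: "f ` set (alt x y n) \<subseteq> carrier G" "f ` set (alt y x n) \<subseteq> carrier G" for n
    using alt_set[of x y n] alt_set[of y x n] x y by auto
  have P: "?P \<in> carrier G" "?Q \<in> carrier G" using ev_pw_closed[OF sx(1)] ev_pw_closed[OF sx(2)] by auto
  have inv_ok: "\<And>z. z \<in> set (alt y x k) \<Longrightarrow> f z \<in> carrier G \<and> f z \<otimes> f z = \<one>"
    using alt_set[of y x k] x y by auto
  have iQ: "inv ?Q = (if even k then ?P else ?Q)"
    using ev_pw_rev[where f=f and xs="alt y x k", OF inv_ok] by (simp add: alt_rev)
  have pow: "(f x \<otimes> f y) [^] k = ?P \<otimes> (if even k then ?P else ?Q)"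
  proof -
    have "(f x \<otimes> f y) [^] k = word_eval G f (pw (alt x y (k + k)))"
      using ev_alt_double[where f=f and x=x and y=y and k=k, OF x(1) y(1)] by (simp add: mult_2)
    also have "\<dots> = ?P \<otimes> (if even k then ?P else ?Q)"
      using sx by (simp add: alt_add ev_pw_append)
    finally show ?thesis .
  qed
  show ?thesis
  proof (cases "even k")
    case True
    then have iQ': "inv ?Q = ?P" using iQ by simp
    show ?thesis
    proof
      assume "?P = ?Q" then show "(f x \<otimes> f y) [^] k = \<one>" using pow True iQ' P by (metis r_inv)
    next
      assume "(f x \<otimes> f y) [^] k = \<one>"
      then have "?P \<otimes> ?P = \<one>" using pow True by simp
      then have "inv ?P = ?P" using P inv_equality by blast
      then show "?P = ?Q" using iQ' P by (metis inv_inv)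
    qed
  next
    case False
    then have iQ': "inv ?Q = ?Q" using iQ by simp
    show ?thesis
    proof
      assume "?P = ?Q" then show "(f x \<otimes> f y) [^] k = \<one>" using pow False iQ' P by (metis r_inv)
    next
      assume "(f x \<otimes> f y) [^] k = \<one>"
      then have "?P \<otimes> ?Q = \<one>" using pow False by simp
      then have "inv ?Q = ?P" using P inv_equality by blast
      then show "?P = ?Q" using iQ' by simp
    qed
  qed
qed



context cox
begin

abbreviation "G2 \<equiv> cAd Mod NN"
abbreviation "qp \<equiv> (\<lambda>g. NN #>\<^bsub>cAd\<^esub> g)"

sublocale NNn: normal NN cAd by (rule NN_normal)

lemma G2_group: "group G2" by (rule NNn.factorgroup_is_group)

sublocale G2: group G2 by (rule G2_group)

lemma qp_hom: "qp \<in> hom cAd G2" by (rule NNn.r_coset_hom_Mod)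

sublocale qpH: group_hom cAd G2 qp
  by (simp add: group_hom_def group_hom_axioms_def qp_hom G2_group Ad_group)

lemma qp_one_iff: "g \<in> carrier cAd \<Longrightarrow> qp g = \<one>\<^bsub>G2\<^esub> \<Longrightarrow> g \<in> NN"
  using Ad.coset_join1[OF _ _ NN_subgroup] by simp

lemma qp_NN: "g \<in> NN \<Longrightarrow> qp g = \<one>\<^bsub>G2\<^esub>"
proof -
  assume g: "g \<in> NN"
  have "g \<in> carrier cAd" using subgroup.mem_carrier[OF NN_subgroup g] .
  then show ?thesis using Ad.coset_join2[OF _ NN_subgroup g] by simp
qed

lemma qp_sq: "x \<in> cQ \<Longrightarrow> qp (ee x) \<otimes>\<^bsub>G2\<^esub> qp (ee x) = \<one>\<^bsub>G2\<^esub>"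
proof -
  assume x: "x \<in> cQ"
  have "qp (ee x \<otimes>\<^bsub>cAd\<^esub> ee x) = qp (ee x) \<otimes>\<^bsub>G2\<^esub> qp (ee x)"
    by (rule qpH.hom_mult[OF ee_in[OF x] ee_in[OF x]])
  then show ?thesis using qp_NN[OF sq_NN[OF x]] by simp
qed

abbreviation "evA xs \<equiv> word_eval cAd ee (pw xs)"
abbreviation "evW xs \<equiv> word_eval cW (\<lambda>a. a) (pw xs)"

lemma evA_closed: "set xs \<subseteq> cQ \<Longrightarrow> evA xs \<in> carrier cAd"
  by (rule Ad.ev_pw_closed) (use ee_in in auto)

lemma evW_closed: "set xs \<subseteq> cQ \<Longrightarrow> evW xs \<in> carrier cW"
  by (rule W.ev_pw_closed) (use Q_carrier in auto)

lemma pal: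
  assumes "set xs \<subseteq> cQ" "x \<in> cQ"
  shows "evW xs \<otimes>\<^bsub>cW\<^esub> x \<otimes>\<^bsub>cW\<^esub> inv\<^bsub>cW\<^esub> evW xs \<in> cQ \<and>
         qp (evA (xs @ [x] @ rev xs)) = qp (ee (evW xs \<otimes>\<^bsub>cW\<^esub> x \<otimes>\<^bsub>cW\<^esub> inv\<^bsub>cW\<^esub> evW xs))"
  using assms
proof (induct xs)
  case Nil
  then show ?case using ee_in Q_carrier by (simp add: word_eval_Cons)
next
  case (Cons y xs)
  let ?P = "evW xs"
  let ?x' = "?P \<otimes>\<^bsub>cW\<^esub> x \<otimes>\<^bsub>cW\<^esub> inv\<^bsub>cW\<^esub> ?P"
  have y: "y \<in> cQ" and xs: "set xs \<subseteq> cQ" using Cons by auto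
  have IH: "?x' \<in> cQ" "qp (evA (xs @ [x] @ rev xs)) = qp (ee ?x')" using Cons xs by auto
  have P: "?P \<in> carrier cW" using evW_closed xs .
  have yc: "y \<in> carrier cW" using y Q_carrier by simp
  have xc: "x \<in> carrier cW" using Cons Q_carrier by simp
  have new: "evW (y # xs) \<otimes>\<^bsub>cW\<^esub> x \<otimes>\<^bsub>cW\<^esub> inv\<^bsub>cW\<^esub> evW (y # xs) = y \<otimes>\<^bsub>cW\<^esub> ?x' \<otimes>\<^bsub>cW\<^esub> y"
    using P yc xc Q_inv[OF y] by (simp add: word_eval_Cons W.inv_mult_group W.m_assoc)
  have newQ: "y \<otimes>\<^bsub>cW\<^esub> ?x' \<otimes>\<^bsub>cW\<^esub> y \<in> cQ" using Q_conj2[OF IH(1) y] .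
  let ?M = "evA (xs @ [x] @ rev xs)"
  have M: "?M \<in> carrier cAd" using evA_closed Cons by auto
  have ey: "ee y \<in> carrier cAd" "ee ?x' \<in> carrier cAd" using ee_in y IH by auto
  have evAeq: "evA ((y # xs) @ [x] @ rev (y # xs)) = ee y \<otimes>\<^bsub>cAd\<^esub> (?M \<otimes>\<^bsub>cAd\<^esub> ee y)"
  proof -
    have "(y # xs) @ [x] @ rev (y # xs) = y # ((xs @ [x] @ rev xs) @ [y])" by simp
    moreover have "evA ((xs @ [x] @ rev xs) @ [y]) = ?M \<otimes>\<^bsub>cAd\<^esub> evA [y]"
      using Ad.ev_pw_append[where f=ee and xs="xs @ [x] @ rev xs" and ys="[y]"] ee_in Cons y
      by (auto simp del: append_assoc)
    ultimately show ?thesis using ey by (simp add: word_eval_Cons)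
  qed
  note hm = qpH.hom_mult
  let ?A = "ee y" and ?B = "ee ?x'"
  have s1: "qp (?A \<otimes>\<^bsub>cAd\<^esub> (?M \<otimes>\<^bsub>cAd\<^esub> ?A)) = qp ?A \<otimes>\<^bsub>G2\<^esub> (qp ?M \<otimes>\<^bsub>G2\<^esub> qp ?A)"
    using M ey by (simp only: hm Ad.m_closed)
  have s2: "qp (?A \<otimes>\<^bsub>cAd\<^esub> (?B \<otimes>\<^bsub>cAd\<^esub> ?A)) = qp ?A \<otimes>\<^bsub>G2\<^esub> (qp ?B \<otimes>\<^bsub>G2\<^esub> qp ?A)"
    using M ey by (simp only: hm Ad.m_closed)
  have s3: "?A \<otimes>\<^bsub>cAd\<^esub> (?B \<otimes>\<^bsub>cAd\<^esub> ?A) = (?A \<otimes>\<^bsub>cAd\<^esub> ?B \<otimes>\<^bsub>cAd\<^esub> inv\<^bsub>cAd\<^esub> ?A) \<otimes>\<^bsub>cAd\<^esub> (?A \<otimes>\<^bsub>cAd\<^esub> ?A)"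
    using ey by (simp add: Ad.m_assoc)
  have s4: "qp ((?A \<otimes>\<^bsub>cAd\<^esub> ?B \<otimes>\<^bsub>cAd\<^esub> inv\<^bsub>cAd\<^esub> ?A) \<otimes>\<^bsub>cAd\<^esub> (?A \<otimes>\<^bsub>cAd\<^esub> ?A))
      = qp (?A \<otimes>\<^bsub>cAd\<^esub> ?B \<otimes>\<^bsub>cAd\<^esub> inv\<^bsub>cAd\<^esub> ?A) \<otimes>\<^bsub>G2\<^esub> qp (?A \<otimes>\<^bsub>cAd\<^esub> ?A)"
    using ey by (simp only: hm Ad.m_closed Ad.inv_closed)
  have s5: "qp (?A \<otimes>\<^bsub>cAd\<^esub> ?A) = \<one>\<^bsub>G2\<^esub>" using qp_NN[OF sq_NN[OF y]] .
  have s6: "qp (?A \<otimes>\<^bsub>cAd\<^esub> ?B \<otimes>\<^bsub>cAd\<^esub> inv\<^bsub>cAd\<^esub> ?A) \<in> carrier G2"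
    using ey by (simp only: qpH.hom_closed Ad.m_closed Ad.inv_closed)
  have c1: "qp (evA ((y # xs) @ [x] @ rev (y # xs))) = qp (?A \<otimes>\<^bsub>cAd\<^esub> (?M \<otimes>\<^bsub>cAd\<^esub> ?A))"
    by (simp only: evAeq)
  have c2: "qp (?A \<otimes>\<^bsub>cAd\<^esub> (?M \<otimes>\<^bsub>cAd\<^esub> ?A)) = qp (?A \<otimes>\<^bsub>cAd\<^esub> (?B \<otimes>\<^bsub>cAd\<^esub> ?A))"
    by (simp only: s1 s2 IH(2))
  have c3: "qp (?A \<otimes>\<^bsub>cAd\<^esub> (?B \<otimes>\<^bsub>cAd\<^esub> ?A)) = qp (?A \<otimes>\<^bsub>cAd\<^esub> ?B \<otimes>\<^bsub>cAd\<^esub> inv\<^bsub>cAd\<^esub> ?A)"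
    by (simp only: s3 s4 s5 G2.r_one[OF s6])
  have c4: "qp (?A \<otimes>\<^bsub>cAd\<^esub> ?B \<otimes>\<^bsub>cAd\<^esub> inv\<^bsub>cAd\<^esub> ?A) = qp (ee (y \<otimes>\<^bsub>cW\<^esub> ?x' \<otimes>\<^bsub>cW\<^esub> y))"
    by (simp only: Ad_rel'[OF IH(1) y])
  have fin: "qp (evA ((y # xs) @ [x] @ rev (y # xs))) = qp (ee (y \<otimes>\<^bsub>cW\<^esub> ?x' \<otimes>\<^bsub>cW\<^esub> y))"
    using c1 c2 c3 c4 by (rule trans[OF trans[OF trans]])
  show ?case unfolding new using newQ fin by (rule conjI)
qed

lemma odd_alt:
  assumes "x \<in> cQ" "y \<in> cQ"
  shows "evW (alt x y (Suc (2 * j))) \<in> cQ \<and> qp (evA (alt x y (Suc (2 * j)))) = qp (ee (evW (alt x y (Suc (2 * j)))))"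
proof -
  let ?xs = "alt x y j" and ?c = "if even j then x else y"
  have xs: "set ?xs \<subseteq> cQ" using alt_set[of x y j] assms by auto
  have c: "?c \<in> cQ" using assms by simp
  have inv_ok: "\<And>z. z \<in> set ?xs \<Longrightarrow> z \<in> carrier cW \<and> z \<otimes>\<^bsub>cW\<^esub> z = \<one>\<^bsub>cW\<^esub>"
    using xs Q_carrier Q_inv1 by auto
  have "evW (alt x y (Suc (2 * j))) = evW ?xs \<otimes>\<^bsub>cW\<^esub> ?c \<otimes>\<^bsub>cW\<^esub> inv\<^bsub>cW\<^esub> evW ?xs"
  proof -
    have e1: "evW (alt x y (Suc (2 * j))) = evW ?xs \<otimes>\<^bsub>cW\<^esub> evW ([?c] @ rev ?xs)"
      unfolding alt_odd
      by (rule W.ev_pw_append) (use xs c Q_carrier in auto)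
    have e2: "evW ([?c] @ rev ?xs) = ?c \<otimes>\<^bsub>cW\<^esub> evW (rev ?xs)"
      by (simp add: word_eval_Cons)
    have e3: "evW (rev ?xs) = inv\<^bsub>cW\<^esub> evW ?xs"
      using W.ev_pw_rev[where f="\<lambda>a. a" and xs="?xs", OF inv_ok] by simp
    have cc: "?c \<in> carrier cW" using c Q_carrier by blast
    show ?thesis unfolding e1 e2 e3 using evW_closed[OF xs] cc by (simp add: W.m_assoc)
  qed
  note E = this
  have eq: "alt x y (Suc (2 * j)) = ?xs @ [?c] @ rev ?xs" by (rule alt_odd)
  note AB = pal[OF xs c]
  note A = conjunct1[OF AB] and B = conjunct2[OF AB]
  show ?thesis using A B E by (simp only: eq)
qed

end



context cox
begin

lemma evA_qp: "set xs \<subseteq> cQ \<Longrightarrow> qp (evA xs) = word_eval G2 (\<lambda>a. qp (ee a)) (pw xs)"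
  using hom_word_eval[OF Ad_group G2_group qp_hom ee_img, of "pw xs"] by (simp add: comp_def)

lemma braid_W:
  assumes x: "x \<in> cQ" and y: "y \<in> cQ" and k: "(x \<otimes>\<^bsub>cW\<^esub> y) [^]\<^bsub>cW\<^esub> (k::nat) = \<one>\<^bsub>cW\<^esub>"
  shows "evW (alt x y k) = evW (alt y x k)"
  using W.braid_iff[where f="\<lambda>a. a" and x=x and y=y and k=k] Q_carrier Q_inv1 x y k by simp

lemma E1:
  assumes x: "x \<in> cQ" and y: "y \<in> cQ" and k: "(x \<otimes>\<^bsub>cW\<^esub> y) [^]\<^bsub>cW\<^esub> (k::nat) = \<one>\<^bsub>cW\<^esub>"
  shows "(qp (ee x) \<otimes>\<^bsub>G2\<^esub> qp (ee y)) [^]\<^bsub>G2\<^esub> k = \<one>\<^bsub>G2\<^esub>"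
proof -
  have bW: "evW (alt x y k) = evW (alt y x k)" using braid_W[OF x y k] .
  have sxy: "set (alt x y n) \<subseteq> cQ" "set (alt y x n) \<subseteq> cQ" for n
    using alt_set[of x y n] alt_set[of y x n] x y by auto
  have eq: "qp (evA (alt x y k)) = qp (evA (alt y x k))"
  proof (cases "even k")
    case False
    then obtain j where j: "k = Suc (2 * j)" by (metis oddE Suc_eq_plus1)
    show ?thesis using odd_alt[OF x y, of j] odd_alt[OF y x, of j] bW j by simp
  next
    case True
    show ?thesis
    proof (cases k)
      case 0 then show ?thesis by simp
    next
      case (Suc i)
      then have oi: "odd i" using True by simp
      then obtain j where j: "i = Suc (2 * j)" by (metis oddE Suc_eq_plus1)
      let ?w = "evW (alt x y i)"
      have w: "?w \<in> cQ" "qp (evA (alt x y i)) = qp (ee ?w)" using odd_alt[OF x y, of j] j by auto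
      have wc: "?w \<in> carrier cW" using w Q_carrier by simp
      have yc: "y \<in> carrier cW" using y Q_carrier by simp
      have l1: "alt x y k = alt x y i @ [y]" using Suc alt_Suc_snoc[of x y i] oi by simp
      have l2: "alt y x k = y # alt x y i" using Suc by simp
      have A1: "evA (alt x y k) = evA (alt x y i) \<otimes>\<^bsub>cAd\<^esub> ee y"
      proof -
        have im: "ee ` set (alt x y i) \<subseteq> carrier cAd" using sxy(1)[of i] ee_in by auto
        have "evA (alt x y i @ [y]) = evA (alt x y i) \<otimes>\<^bsub>cAd\<^esub> evA [y]"
          by (rule Ad.ev_pw_append[OF im]) (use ee_in y in auto)
        then show ?thesis unfolding l1 using ee_in[OF y] by (simp add: word_eval_Cons)
      qed
      have A2: "evA (alt y x k) = ee y \<otimes>\<^bsub>cAd\<^esub> evA (alt x y i)"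
        unfolding l2 by (simp add: word_eval_Cons)
      have W1: "evW (alt x y k) = ?w \<otimes>\<^bsub>cW\<^esub> y"
      proof -
        have im: "(\<lambda>a. a) ` set (alt x y i) \<subseteq> carrier cW" using sxy(1)[of i] Q_carrier by auto
        have "evW (alt x y i @ [y]) = evW (alt x y i) \<otimes>\<^bsub>cW\<^esub> evW [y]"
          by (rule W.ev_pw_append[OF im]) (use Q_carrier y in auto)
        then show ?thesis unfolding l1 using yc by (simp add: word_eval_Cons)
      qed
      have W2: "evW (alt y x k) = y \<otimes>\<^bsub>cW\<^esub> ?w"
        unfolding l2 using wc by (simp add: word_eval_Cons)
      have wy: "?w \<otimes>\<^bsub>cW\<^esub> y = y \<otimes>\<^bsub>cW\<^esub> ?w" using bW W1 W2 by simp
      have "y \<otimes>\<^bsub>cW\<^esub> ?w \<otimes>\<^bsub>cW\<^esub> y = ?w \<otimes>\<^bsub>cW\<^esub> y \<otimes>\<^bsub>cW\<^esub> y"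
        by (simp only: wy[symmetric])
      also have "\<dots> = ?w \<otimes>\<^bsub>cW\<^esub> (y \<otimes>\<^bsub>cW\<^esub> y)" using wc yc yc by (rule W.m_assoc)
      finally have "y \<otimes>\<^bsub>cW\<^esub> ?w \<otimes>\<^bsub>cW\<^esub> y = ?w \<otimes>\<^bsub>cW\<^esub> (y \<otimes>\<^bsub>cW\<^esub> y)" .
      then have ywy: "y \<otimes>\<^bsub>cW\<^esub> ?w \<otimes>\<^bsub>cW\<^esub> y = ?w" using Q_inv1[OF y] wc by simp
      have eA: "inv\<^bsub>cAd\<^esub> ee y \<otimes>\<^bsub>cAd\<^esub> ee ?w \<otimes>\<^bsub>cAd\<^esub> ee y = ee ?w"
        using Ad_rel[OF w(1) y] ywy by simp
      have comm: "ee ?w \<otimes>\<^bsub>cAd\<^esub> ee y = ee y \<otimes>\<^bsub>cAd\<^esub> ee ?w"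
      proof -
        have c: "ee ?w \<in> carrier cAd" "ee y \<in> carrier cAd" using ee_in w(1) y by auto
        have "ee y \<otimes>\<^bsub>cAd\<^esub> ee ?w = ee y \<otimes>\<^bsub>cAd\<^esub> (inv\<^bsub>cAd\<^esub> ee y \<otimes>\<^bsub>cAd\<^esub> ee ?w \<otimes>\<^bsub>cAd\<^esub> ee y)"
          by (simp only: eA)
        also have "\<dots> = ee ?w \<otimes>\<^bsub>cAd\<^esub> ee y" using c by (simp add: Ad.m_assoc)
        finally show ?thesis by simp
      qed
      have ca: "evA (alt x y i) \<in> carrier cAd" using evA_closed sxy by blast
      have "qp (evA (alt x y k)) = qp (evA (alt x y i)) \<otimes>\<^bsub>G2\<^esub> qp (ee y)"
        unfolding A1 by (rule qpH.hom_mult[OF ca ee_in[OF y]])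
      also have "\<dots> = qp (ee ?w) \<otimes>\<^bsub>G2\<^esub> qp (ee y)" by (simp only: w(2))
      also have "\<dots> = qp (ee ?w \<otimes>\<^bsub>cAd\<^esub> ee y)"
        by (rule qpH.hom_mult[symmetric, OF ee_in[OF w(1)] ee_in[OF y]])
      also have "\<dots> = qp (ee y \<otimes>\<^bsub>cAd\<^esub> ee ?w)" by (simp only: comm)
      also have "\<dots> = qp (ee y) \<otimes>\<^bsub>G2\<^esub> qp (ee ?w)"
        by (rule qpH.hom_mult[OF ee_in[OF y] ee_in[OF w(1)]])
      also have "\<dots> = qp (ee y) \<otimes>\<^bsub>G2\<^esub> qp (evA (alt x y i))" by (simp only: w(2))
      also have "\<dots> = qp (evA (alt y x k))"
        unfolding A2 by (rule qpH.hom_mult[symmetric, OF ee_in[OF y] ca])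
      finally show ?thesis .
    qed
  qed
  have fx: "qp (ee x) \<in> carrier G2" "qp (ee x) \<otimes>\<^bsub>G2\<^esub> qp (ee x) = \<one>\<^bsub>G2\<^esub>"
    using qpH.hom_closed ee_in x qp_sq by auto
  have fy: "qp (ee y) \<in> carrier G2" "qp (ee y) \<otimes>\<^bsub>G2\<^esub> qp (ee y) = \<one>\<^bsub>G2\<^esub>"
    using qpH.hom_closed ee_in y qp_sq by auto
  have "word_eval G2 (\<lambda>a. qp (ee a)) (pw (alt x y k)) = word_eval G2 (\<lambda>a. qp (ee a)) (pw (alt y x k))"
    using eq evA_qp sxy by simp
  then show ?thesis
    using G2.braid_iff[where f="\<lambda>a. qp (ee a)" and x=x and y=y and k=k] fx fy by simp
qed

end



context cox
begin

definition thet where "thet = pres_hom G2 (\<lambda>s. qp (ee (gs s)))"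

lemma thet_img: "(\<lambda>s. qp (ee (gs s))) ` S \<subseteq> carrier G2"
  using qpH.hom_closed ee_in gs_Q by auto

lemma thet_rel:
  assumes "r \<in> cox_rels S m" "r \<in> pres_words S"
  shows "word_eval G2 (\<lambda>s. qp (ee (gs s))) r = \<one>\<^bsub>G2\<^esub>"
proof -
  obtain s t k where stk: "s \<in> S" "t \<in> S" "m s t = enat k" "r = concat (replicate k [(s, True), (t, True)])"
    using assms(1) unfolding cox_rels_def by blast
  have "word_eval G2 (\<lambda>s. qp (ee (gs s))) r = (qp (ee (gs s)) \<otimes>\<^bsub>G2\<^esub> qp (ee (gs t))) [^]\<^bsub>G2\<^esub> k"
    unfolding stk(4) by (rule G2.word_eval_rep) (use thet_img stk in auto)
  also have "\<dots> = \<one>\<^bsub>G2\<^esub>" using E1[OF gs_Q[OF stk(1)] gs_Q[OF stk(2)] W_braid[OF stk(1-3)]] .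
  finally show ?thesis .
qed

lemma thet_hom: "thet \<in> hom cW G2"
  unfolding thet_def coxeter_group_def
  by (rule G2.pres_hom_hom[OF thet_img]) (simp add: thet_rel coxeter_group_def)

sublocale thetH: group_hom cW G2 thet
  by (simp add: group_hom_def group_hom_axioms_def thet_hom G2_group W_group)

lemma thet_gs: "s \<in> S \<Longrightarrow> thet (gs s) = qp (ee (gs s))"
proof -
  assume s: "s \<in> S"
  have a: "pres_hom G2 (\<lambda>s. qp (ee (gs s))) (pres_rel S (cox_rels S m) `` {[(s, True)]})
      = word_eval G2 (\<lambda>s. qp (ee (gs s))) [(s, True)]"
    by (rule G2.pres_hom_class[OF thet_img]) (auto simp: thet_rel s)
  have "thet (gs s) = word_eval G2 (\<lambda>s. qp (ee (gs s))) [(s, True)]"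
    unfolding thet_def pres_gen_def[of S "cox_rels S m" s] by (rule a)
  moreover have c: "qp (ee (gs s)) \<in> carrier G2" using qpH.hom_closed ee_in gs_Q s by simp
  ultimately show ?thesis using G2.r_one[OF c]
    by (simp only: word_eval_Cons word_eval_Nil snd_conv fst_conv if_True)
qed

lemma lift:
  assumes "w \<in> carrier cW"
  obtains g where "g \<in> carrier cAd" "phi g = w" "thet w = qp g"
proof -
  obtain u where u: "u \<in> pres_words S" "w = pres_rel S (cox_rels S m) `` {u}"
    using assms unfolding coxeter_group_def pres_carrier by (blast elim: quotientE)
  have wu: "w = word_eval cW gs u" using W_class_eval u by simp
  let ?g = "word_eval cAd (ee \<circ> gs) u"
  have g: "?g \<in> carrier cAd" using Ad.word_eval_closed[OF ee_words u(1)] .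
  have "phi ?g = word_eval cW (phi \<circ> (ee \<circ> gs)) u"
    using hom_word_eval[OF Ad_group W_group phi_hom ee_words u(1)] .
  also have "\<dots> = word_eval cW gs u"
    by (rule word_eval_cong[OF _ u(1)]) (simp add: phi_ee gs_Q)
  finally have p: "phi ?g = w" using wu by simp
  have gsi: "gs ` S \<subseteq> carrier cW" using gs_in by auto
  have "thet w = word_eval G2 (thet \<circ> gs) u"
    unfolding wu using hom_word_eval[OF W_group G2_group thet_hom gsi u(1)] .
  also have "\<dots> = word_eval G2 (qp \<circ> (ee \<circ> gs)) u"
    by (rule word_eval_cong[OF _ u(1)]) (simp add: thet_gs)
  also have "\<dots> = qp ?g"
    using hom_word_eval[OF Ad_group G2_group qp_hom ee_words u(1)] by simp
  finally show ?thesis using that g p by blast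
qed

lemma thet_phi_ee:
  assumes x: "x \<in> cQ"
  shows "thet (phi (ee x)) = qp (ee x)"
proof -
  obtain w s where ws: "w \<in> carrier cW" "s \<in> S" "x = inv\<^bsub>cW\<^esub> w \<otimes>\<^bsub>cW\<^esub> gs s \<otimes>\<^bsub>cW\<^esub> w"
    using x unfolding Q_def' by blast
  obtain g where g: "g \<in> carrier cAd" "phi g = w" "thet w = qp g" using lift[OF ws(1)] by blast
  have gs: "gs s \<in> carrier cW" using gs_in ws by simp
  have e: "ee (gs s) \<in> carrier cAd" using ee_in gs_Q ws by simp
  have "thet (phi (ee x)) = thet x" using phi_ee x by simp
  also have "\<dots> = thet (inv\<^bsub>cW\<^esub> w \<otimes>\<^bsub>cW\<^esub> gs s) \<otimes>\<^bsub>G2\<^esub> thet w"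
    unfolding ws(3) by (rule thetH.hom_mult) (use ws gs in auto)
  also have "thet (inv\<^bsub>cW\<^esub> w \<otimes>\<^bsub>cW\<^esub> gs s) = thet (inv\<^bsub>cW\<^esub> w) \<otimes>\<^bsub>G2\<^esub> thet (gs s)"
    by (rule thetH.hom_mult) (use ws gs in auto)
  also have "thet (inv\<^bsub>cW\<^esub> w) = inv\<^bsub>G2\<^esub> (qp g)"
    using thetH.hom_inv[OF ws(1)] g by simp
  also have "thet (gs s) = qp (ee (gs s))" using thet_gs ws by simp
  also have "thet w = qp g" using g by simp
  also have "inv\<^bsub>G2\<^esub> (qp g) = qp (inv\<^bsub>cAd\<^esub> g)" using qpH.hom_inv[OF g(1)] by simp
  also have "qp (inv\<^bsub>cAd\<^esub> g) \<otimes>\<^bsub>G2\<^esub> qp (ee (gs s)) = qp (inv\<^bsub>cAd\<^esub> g \<otimes>\<^bsub>cAd\<^esub> ee (gs s))"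
    by (rule qpH.hom_mult[symmetric]) (use g e in auto)
  also have "qp (inv\<^bsub>cAd\<^esub> g \<otimes>\<^bsub>cAd\<^esub> ee (gs s)) \<otimes>\<^bsub>G2\<^esub> qp g = qp (inv\<^bsub>cAd\<^esub> g \<otimes>\<^bsub>cAd\<^esub> ee (gs s) \<otimes>\<^bsub>cAd\<^esub> g)"
    by (rule qpH.hom_mult[symmetric]) (use g e in auto)
  also have "inv\<^bsub>cAd\<^esub> g \<otimes>\<^bsub>cAd\<^esub> ee (gs s) \<otimes>\<^bsub>cAd\<^esub> g = ee x"
    using conj_formula[OF g(1) gs_Q[OF ws(2)]] g ws by simp
  finally show ?thesis .
qed

lemma CW_NN: "c \<in> C_W S m \<Longrightarrow> c \<in> NN"
proof -
  assume c: "c \<in> C_W S m"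
  have cc: "c \<in> carrier cAd" "phi c = \<one>\<^bsub>cW\<^esub>" using c CW_mem by auto
  have h1: "(\<lambda>g. thet (phi g)) \<in> hom cAd G2"
    by (rule homI) (simp_all add: thetH.hom_mult)
  have "thet (phi c) = qp c"
    by (rule Ad_hom_unique[OF G2_group h1 qp_hom _ cc(1)]) (rule thet_phi_ee)
  then have "qp c = \<one>\<^bsub>G2\<^esub>" using cc by simp
  then show ?thesis using qp_one_iff cc by blast
qed

end



lemma lin_dep:
  fixes v :: "'b \<Rightarrow> 'k \<Rightarrow> int"
  assumes "finite K" "finite B" "card K < card B"
  shows "\<exists>n. (\<exists>b\<in>B. n b \<noteq> 0) \<and> (\<forall>k\<in>K. (\<Sum>b\<in>B. n b * v b k) = 0)"
  using assms
proof (induct K arbitrary: B v rule: finite_induct)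
  case empty
  then obtain b0 where "b0 \<in> B" by fastforce
  then show ?case by (intro exI[of _ "\<lambda>b. if b = b0 then 1 else 0"]) auto
next
  case (insert k K B v)
  have cK: "card K < card B" using insert by simp
  show ?case
  proof (cases "\<forall>b\<in>B. v b k = 0")
    case True
    obtain n where n: "\<exists>b\<in>B. n b \<noteq> 0" "\<forall>j\<in>K. (\<Sum>b\<in>B. n b * v b j) = 0"
      using insert(3)[OF insert(4) cK] by blast
    have "(\<Sum>b\<in>B. n b * v b k) = 0" using True by simp
    then show ?thesis using n by auto
  next
    case False
    then obtain b0 where b0: "b0 \<in> B" "v b0 k \<noteq> 0" by blast
    define d where "d = v b0 k"
    define B' where "B' = B - {b0}"
    define v' where "v' = (\<lambda>b j. d * v b j - v b k * v b0 j)"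
    have fB': "finite B'" using insert(4) unfolding B'_def by simp
    have cB': "card K < card B'" using insert(5) insert(1,2) b0 unfolding B'_def
      by (simp add: card_Diff_singleton)
    obtain n' where n': "\<exists>b\<in>B'. n' b \<noteq> 0" "\<forall>j\<in>K. (\<Sum>b\<in>B'. n' b * v' b j) = 0"
      using insert(3)[OF fB' cB', of v'] by blast
    define n where "n = (\<lambda>b. if b = b0 then - (\<Sum>b'\<in>B'. n' b' * v b' k) else d * n' b)"
    have key: "(\<Sum>b\<in>B. n b * v b j) = (\<Sum>b\<in>B'. n' b * v' b j)" for j
    proof -
      have "(\<Sum>b\<in>B. n b * v b j) = n b0 * v b0 j + (\<Sum>b\<in>B'. n b * v b j)"
        unfolding B'_def using sum.remove[OF insert(4) b0(1)] by simp
      also have "(\<Sum>b\<in>B'. n b * v b j) = (\<Sum>b\<in>B'. d * (n' b * v b j))"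
        by (rule sum.cong) (auto simp: n_def B'_def)
      also have "\<dots> = d * (\<Sum>b\<in>B'. n' b * v b j)" by (simp add: sum_distrib_left)
      also have "n b0 * v b0 j = - ((\<Sum>b\<in>B'. n' b * v b k) * v b0 j)" by (simp add: n_def)
      also have "(\<Sum>b\<in>B'. n' b * v b k) * v b0 j = (\<Sum>b\<in>B'. n' b * v b k * v b0 j)"
        by (simp add: sum_distrib_right)
      finally have e1: "(\<Sum>b\<in>B. n b * v b j) = d * (\<Sum>b\<in>B'. n' b * v b j) - (\<Sum>b\<in>B'. n' b * v b k * v b0 j)"
        by simp
      have "(\<Sum>b\<in>B'. n' b * v' b j) = (\<Sum>b\<in>B'. d * (n' b * v b j) - n' b * v b k * v b0 j)"
        by (rule sum.cong) (auto simp: v'_def algebra_simps)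
      also have "\<dots> = (\<Sum>b\<in>B'. d * (n' b * v b j)) - (\<Sum>b\<in>B'. n' b * v b k * v b0 j)"
        by (rule sum_subtractf)
      also have "(\<Sum>b\<in>B'. d * (n' b * v b j)) = d * (\<Sum>b\<in>B'. n' b * v b j)" by (simp add: sum_distrib_left)
      finally show ?thesis using e1 by simp
    qed
    have z: "\<forall>j\<in>insert k K. (\<Sum>b\<in>B. n b * v b j) = 0"
    proof
      fix j assume j: "j \<in> insert k K"
      show "(\<Sum>b\<in>B. n b * v b j) = 0"
      proof (cases "j = k")
        case True
        have "v' b k = 0" for b unfolding v'_def d_def by simp
        then show ?thesis using key True by simp
      next
        case False
        then show ?thesis using key n'(2) j by simp
      qed
    qed
    obtain b1 where b1: "b1 \<in> B'" "n' b1 \<noteq> 0" using n'(1) by blast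
    have "n b1 \<noteq> 0" using b1 b0 unfolding n_def d_def B'_def by simp
    moreover have "b1 \<in> B" using b1 unfolding B'_def by simp
    ultimately show ?thesis using z by blast
  qed
qed

context cox
begin

lemma eps_pow_sum:
  assumes "finite B" "B \<subseteq> C_W S m"
  shows "eps (finprod cC (\<lambda>b. b [^]\<^bsub>cC\<^esub> (n b :: int)) B) k = (\<Sum>b\<in>B. n b * eps b k)"
proof -
  have Pi: "(\<lambda>b. b [^]\<^bsub>cC\<^esub> (n b :: int)) \<in> B \<rightarrow> C_W S m" using assms pow_CW by auto
  show ?thesis using eps_finprod[OF assms(1) Pi] assms eps_pow
    by (auto intro!: sum.cong)
qed

lemma eps_one: "eps \<one>\<^bsub>cAd\<^esub> = (\<lambda>k. 0)"
  using epsH.hom_one by simp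

lemma zz_inj: "inj_on zz KK"
proof
  fix k1 k2 assume k: "k1 \<in> KK" "k2 \<in> KK" "zz k1 = zz k2"
  then have e: "eps (zz k1) k1 = eps (zz k2) k1" by simp
  have e1: "eps (zz k1) k1 = 2" using eps_zz[OF k(1)] by simp
  show "k1 = k2"
  proof (rule ccontr)
    assume ne: "k1 \<noteq> k2"
    have "eps (zz k2) k1 = 0" using eps_zz[OF k(2)] ne by simp
    then show False using e e1 by simp
  qed
qed

theorem rank: "has_rank cC (card KK)"
  unfolding has_rank_def
proof (intro conjI allI impI)
  let ?B0 = "zz ` KK"
  have B0: "?B0 \<subseteq> C_W S m" using zz_CW by auto
  have "Z_independent cC ?B0"
    unfolding Z_independent_def
  proof (intro conjI allI impI ballI)
    show "?B0 \<subseteq> carrier cC" using B0 by simp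
    show "finite ?B0" using KK_finite by simp
  next
    fix n :: "_ \<Rightarrow> int" and x
    assume eq: "finprod cC (\<lambda>x. x [^]\<^bsub>cC\<^esub> n x) ?B0 = \<one>\<^bsub>cC\<^esub>" and x: "x \<in> ?B0"
    then obtain k0 where k0: "k0 \<in> KK" "x = zz k0" by blast
    have "0 = eps (finprod cC (\<lambda>x. x [^]\<^bsub>cC\<^esub> n x) ?B0) k0" using eq eps_one by simp
    also have "\<dots> = (\<Sum>b\<in>?B0. n b * eps b k0)"
      by (rule eps_pow_sum) (use KK_finite B0 in auto)
    also have "\<dots> = (\<Sum>k\<in>KK. n (zz k) * eps (zz k) k0)"
      by (rule sum.reindex[OF zz_inj, unfolded comp_def])
    also have "\<dots> = (\<Sum>k\<in>KK. if k = k0 then 2 * n (zz k0) else 0)"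
      by (rule sum.cong) (auto simp: eps_zz)
    also have "\<dots> = 2 * n (zz k0)" using k0 KK_finite by simp
    finally show "n x = 0" using k0 by simp
  qed
  moreover have "card ?B0 = card KK" using card_image[OF zz_inj] .
  ultimately show "\<exists>B. Z_independent cC B \<and> card B = card KK" by blast
next
  fix B assume ind: "Z_independent cC B"
  then have B: "B \<subseteq> C_W S m" "finite B"
    and indep: "\<And>n :: _ \<Rightarrow> int. finprod cC (\<lambda>x. x [^]\<^bsub>cC\<^esub> n x) B = \<one>\<^bsub>cC\<^esub> \<Longrightarrow> \<forall>x\<in>B. n x = 0"
    unfolding Z_independent_def by auto
  show "card B \<le> card KK"
  proof (rule ccontr)
    assume "\<not> card B \<le> card KK"
    then have lt: "card KK < card B" by simp
    obtain n where n: "\<exists>b\<in>B. n b \<noteq> 0" "\<forall>k\<in>KK. (\<Sum>b\<in>B. n b * eps b k) = 0"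
      using lin_dep[OF KK_finite B(2) lt, of eps] by blast
    let ?g = "finprod cC (\<lambda>b. b [^]\<^bsub>cC\<^esub> n b) B"
    have gC: "?g \<in> C_W S m" using C.finprod_closed[of "\<lambda>b. b [^]\<^bsub>cC\<^esub> n b" B] B pow_CW by auto
    then have "?g \<in> NN" by (rule CW_NN)
    then obtain a where a: "?g = Nf a" unfolding NN_def by blast
    have "a k = 0" if k: "k \<in> KK" for k
    proof -
      have "2 * a k = eps ?g k" using eps_Nf[OF k] a by simp
      also have "\<dots> = (\<Sum>b\<in>B. n b * eps b k)" by (rule eps_pow_sum[OF B(2) B(1)])
      also have "\<dots> = 0" using n(2) k by simp
      finally show ?thesis by simp
    qed
    then have "?g = \<one>\<^bsub>cAd\<^esub>" using a Nf_zero' by simp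
    then have "\<forall>x\<in>B. n x = 0" using indep by simp
    then show False using n(1) by blast
  qed
qed

end

theorem proposition3p2:
  fixes S :: "'g set" and m :: "'g \<Rightarrow> 'g \<Rightarrow> enat"
  assumes "coxeter_system S m"
  shows "has_rank ((adjoint_group S m)\<lparr>carrier := C_W S m\<rparr>)
           (card (conj_class (coxeter_group S m) ` coxeter_quandle S m))"
proof -
  interpret cox S m by (rule cox.intro[OF assms])
  show ?thesis using rank unfolding KK_def .
qed



end
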